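(* Let $\mathbb{F}$ be a field of characteristic zero, $d\ge 2$, $n=2d-2$, $P_n=\mathbb{F}[x_1,\dots,x_n]$ and $I_n=\big(x_1^2,\dots,x_n^2,(x_1+\cdots+x_n)^2\big)$; let $\mathrm{in}(I_n)$ be its initial ideal with respect to the reverse lexicographic order. If $\mu\in P_n$ is a monomial with $\deg(\mu)\le d-2$ and $\mu\notin\mathrm{in}(I_n)$, then there exists a monomial $\widetilde{\mu}\in P_n$ which is a multiple of $\mu$, with $\deg(\widetilde\mu)=\deg(\mu)+1$ and $\widetilde\mu\notin\mathrm{in}(I_n)$.
   Context: The reverse lexicographic order is taken with $x_1>x_2>\cdots>x_n$. *)

theory Defs
  imports "HOL-Library.Poly_Mapping"
begin

text \<open>Variables x_1,...,x_n are indexed by 0,...,n-1 (x_(i+1) has index i).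
  Monomials are finitely supported exponent vectors; polynomials with
  coefficients in a field are finitely supported maps monomial to coefficient, with convolution product.\<close>

type_synonym monom = "nat \<Rightarrow>\<^sub>0 nat"
type_synonym 'a mpoly = "monom \<Rightarrow>\<^sub>0 'a"

definition mdeg :: "monom \<Rightarrow> nat" where
  "mdeg m = (\<Sum>i\<in>Poly_Mapping.keys m. Poly_Mapping.lookup m i)"

definition mon :: "monom \<Rightarrow> 'a::comm_ring_1 mpoly" where
  "mon m = Poly_Mapping.single m 1"

definition var :: "nat \<Rightarrow> 'a::comm_ring_1 mpoly" where
  "var i = mon (Poly_Mapping.single i 1)"

definition Pn :: "nat \<Rightarrow> 'a::comm_ring_1 mpoly set" where
  "Pn n = {p. \<forall>m\<in>Poly_Mapping.keys p. Poly_Mapping.keys m \<subseteq> {..<n}}"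

definition is_monomial_in :: "nat \<Rightarrow> monom \<Rightarrow> bool" where
  "is_monomial_in n m \<longleftrightarrow> Poly_Mapping.keys m \<subseteq> {..<n}"

definition gen_ideal :: "nat \<Rightarrow> 'a::comm_ring_1 mpoly set \<Rightarrow> 'a mpoly set" where
  "gen_ideal n S = {p. \<exists>F c. finite F \<and> F \<subseteq> S \<and> (\<forall>f\<in>F. c f \<in> Pn n)
                          \<and> p = (\<Sum>f\<in>F. c f * f)}"

text \<open>(Degree) reverse lexicographic order with x_1 > x_2 > ... > x_n:
  a < b iff deg a < deg b, or the degrees agree and at the last variable where
  the exponents differ, a has the larger exponent.\<close>
definition revlex_less :: "monom \<Rightarrow> monom \<Rightarrow> bool" where
  "revlex_less a b \<longleftrightarrow> mdeg a < mdeg b \<or>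
     (mdeg a = mdeg b \<and> a \<noteq> b \<and>
       (let i = Max {i. Poly_Mapping.lookup a i \<noteq> Poly_Mapping.lookup b i} in Poly_Mapping.lookup b i < Poly_Mapping.lookup a i))"

definition lead_mon :: "'a::zero mpoly \<Rightarrow> monom" where
  "lead_mon p = (THE m. m \<in> Poly_Mapping.keys p \<and> (\<forall>m'\<in>Poly_Mapping.keys p. m' \<noteq> m \<longrightarrow> revlex_less m' m))"

definition initial_ideal :: "nat \<Rightarrow> 'a::comm_ring_1 mpoly set \<Rightarrow> 'a mpoly set" where
  "initial_ideal n I = gen_ideal n {mon (lead_mon p) | p. p \<in> I \<and> p \<noteq> 0}"

definition In :: "nat \<Rightarrow> 'a::comm_ring_1 mpoly set" where
  "In n = gen_ideal n (insert ((\<Sum>i<n. var i) ^ 2) {var i ^ 2 | i. i < n})"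

end

theory Submission
  imports Defs
begin


abbreviation lk :: "('b \<Rightarrow>\<^sub>0 'c::zero) \<Rightarrow> 'b \<Rightarrow> 'c" where "lk \<equiv> Poly_Mapping.lookup"

lemma mdeg_sum: "finite K \<Longrightarrow> Poly_Mapping.keys m \<subseteq> K \<Longrightarrow> mdeg m = (\<Sum>i\<in>K. lk m i)"
  unfolding mdeg_def
  by (rule sum.mono_neutral_left) (auto simp: not_in_keys_iff_lookup_eq_zero)

lemma mdeg_add: "mdeg (a + b) = mdeg a + mdeg b"
proof -
  let ?K = "Poly_Mapping.keys a \<union> Poly_Mapping.keys b"
  have "mdeg (a+b) = (\<Sum>i\<in>?K. lk (a+b) i)"
    by (rule mdeg_sum) (use keys_add[of a b] in auto)
  also have "\<dots> = (\<Sum>i\<in>?K. lk a i) + (\<Sum>i\<in>?K. lk b i)"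
    by (simp add: lookup_add sum.distrib)
  also have "\<dots> = mdeg a + mdeg b"
    using mdeg_sum[of ?K a] mdeg_sum[of ?K b] by simp
  finally show ?thesis .
qed

definition dset :: "monom \<Rightarrow> monom \<Rightarrow> nat set" where
  "dset a b = {i. lk a i \<noteq> lk b i}"

lemma finite_dset: "finite (dset a b)"
proof -
  have "dset a b \<subseteq> Poly_Mapping.keys a \<union> Poly_Mapping.keys b"
  proof (rule subsetI)
    fix i assume "i \<in> dset a b"
    then have "lk a i \<noteq> lk b i" by (simp add: dset_def)
    then show "i \<in> Poly_Mapping.keys a \<union> Poly_Mapping.keys b"
      by (metis UnI1 UnI2 not_in_keys_iff_lookup_eq_zero)
  qed
  then show ?thesis by (rule finite_subset) simp
qed

lemma dset_ne: "a \<noteq> b \<Longrightarrow> dset a b \<noteq> {}"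
proof
  assume ne: "a \<noteq> b" and e: "dset a b = {}"
  have "\<And>i. lk a i = lk b i"
  proof (rule ccontr)
    fix i assume "lk a i \<noteq> lk b i"
    then have "i \<in> dset a b" by (simp add: dset_def)
    then show False using e by simp
  qed
  then have "a = b" by (rule poly_mapping_eqI)
  then show False using ne by simp
qed

lemma rl_def2: "revlex_less a b \<longleftrightarrow> mdeg a < mdeg b \<or>
  (mdeg a = mdeg b \<and> a \<noteq> b \<and> lk b (Max (dset a b)) < lk a (Max (dset a b)))"
  unfolding revlex_less_def dset_def Let_def by simp

lemma rl_intro:
  assumes "mdeg a = mdeg b" "lk b i < lk a i" "\<And>k. k > i \<Longrightarrow> lk a k = lk b k"
  shows "revlex_less a b"
proof -
  have ne: "a \<noteq> b" using assms(2) by auto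
  have iD: "i \<in> dset a b" using assms(2) by (auto simp: dset_def)
  have "Max (dset a b) = i"
  proof (rule Max_eqI[OF finite_dset])
    fix y assume "y \<in> dset a b" then show "y \<le> i" by (rule contrapos_pp) (use assms(3) in \<open>auto simp: dset_def not_le\<close>)
  qed (rule iD)
  then show ?thesis using assms ne by (simp add: rl_def2)
qed

lemma rl_elim:
  assumes "revlex_less a b" "mdeg a = mdeg b"
  shows "\<exists>i. lk b i < lk a i \<and> (\<forall>k>i. lk a k = lk b k)"
proof -
  have ne: "a \<noteq> b" and lt: "lk b (Max (dset a b)) < lk a (Max (dset a b))"
    using assms by (auto simp: rl_def2)
  have "dset a b \<noteq> {}" using ne by (rule dset_ne)
  have "\<forall>k>Max (dset a b). lk a k = lk b k"
  proof (intro allI impI)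
    fix k assume "k > Max (dset a b)"
    then have "k \<notin> dset a b" using Max_ge[OF finite_dset] by force
    then show "lk a k = lk b k" by (simp add: dset_def)
  qed
  then show ?thesis using lt by blast
qed

lemma rl_irrefl: "\<not> revlex_less a a"
  by (simp add: rl_def2)

lemma rl_asym: "revlex_less a b \<Longrightarrow> \<not> revlex_less b a"
proof
  assume ab: "revlex_less a b" and ba: "revlex_less b a"
  have d: "mdeg a = mdeg b" using ab ba by (auto simp: rl_def2)
  obtain i where i: "lk b i < lk a i" "\<forall>k>i. lk a k = lk b k" using rl_elim[OF ab d] by blast
  obtain j where j: "lk a j < lk b j" "\<forall>k>j. lk b k = lk a k" using rl_elim[OF ba d[symmetric]] by blast
  show False
  proof (cases i j rule: linorder_cases)
    case less then show ?thesis using i j by force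
  next
    case equal then show ?thesis using i j by force
  next
    case greater then show ?thesis using i j by force
  qed
qed

lemma rl_trans:
  assumes ab: "revlex_less a b" and bc: "revlex_less b c"
  shows "revlex_less a c"
proof (cases "mdeg a < mdeg b \<or> mdeg b < mdeg c")
  case True
  have "mdeg a \<le> mdeg b" "mdeg b \<le> mdeg c" using ab bc by (auto simp: rl_def2)
  then have "mdeg a < mdeg c" using True by linarith
  then show ?thesis by (simp add: rl_def2)
next
  case False
  then have d1: "mdeg a = mdeg b" and d2: "mdeg b = mdeg c" using ab bc by (auto simp: rl_def2)
  obtain i where i: "lk b i < lk a i" "\<forall>k>i. lk a k = lk b k" using rl_elim[OF ab d1] by blast
  obtain j where j: "lk c j < lk b j" "\<forall>k>j. lk b k = lk c k" using rl_elim[OF bc d2] by blast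
  show ?thesis
  proof (cases i j rule: linorder_cases)
    case less
    have "lk a j = lk b j" using i(2) less by blast
    then have 1: "lk c j < lk a j" using j(1) by linarith
    have 2: "\<And>k. k > j \<Longrightarrow> lk a k = lk c k" using i(2) j(2) less by force
    have 0: "mdeg a = mdeg c" using d1 d2 by linarith
    show ?thesis by (rule rl_intro[OF 0 1 2])
  next
    case equal
    have 2: "\<And>k. k > j \<Longrightarrow> lk a k = lk c k" using i(2) j(2) equal by force
    have "lk b j < lk a j" using i(1) equal by simp
    then have 1: "lk c j < lk a j" using j(1) by linarith
    have 0: "mdeg a = mdeg c" using d1 d2 by linarith
    show ?thesis by (rule rl_intro[OF 0 1 2])
  next
    case greater
    have "lk b i = lk c i" using j(2) greater by blast
    then have 1: "lk c i < lk a i" using i(1) by linarith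
    have 2: "\<And>k. k > i \<Longrightarrow> lk a k = lk c k" using i(2) j(2) greater by force
    have 0: "mdeg a = mdeg c" using d1 d2 by linarith
    show ?thesis by (rule rl_intro[OF 0 1 2])
  qed
qed

lemma rl_total: "a \<noteq> b \<Longrightarrow> revlex_less a b \<or> revlex_less b a"
proof -
  assume ne: "a \<noteq> b"
  show ?thesis
  proof (cases "mdeg a = mdeg b")
    case False then show ?thesis by (auto simp: rl_def2)
  next
    case True
    let ?i = "Max (dset a b)"
    have "dset a b \<noteq> {}" using ne by (rule dset_ne)
    then have "?i \<in> dset a b" using Max_in[OF finite_dset] by blast
    then have "lk a ?i \<noteq> lk b ?i" by (simp add: dset_def)
    have above: "\<And>k. k > ?i \<Longrightarrow> lk a k = lk b k"
    proof -
      fix k assume "k > ?i"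
      then have "k \<notin> dset a b" using Max_ge[OF finite_dset] by force
      then show "lk a k = lk b k" by (simp add: dset_def)
    qed
    show ?thesis
    proof (cases "lk b ?i < lk a ?i")
      case True then show ?thesis using rl_intro[OF \<open>mdeg a = mdeg b\<close> True above] by blast
    next
      case False
      then have "lk a ?i < lk b ?i" using \<open>lk a ?i \<noteq> lk b ?i\<close> by linarith
      then show ?thesis using rl_intro[of b a ?i] True above by force
    qed
  qed
qed

lemma rl_add: "revlex_less a b \<Longrightarrow> revlex_less (a + c) (b + c)"
proof -
  assume ab: "revlex_less a b"
  show ?thesis
  proof (cases "mdeg a < mdeg b")
    case True then show ?thesis by (simp add: rl_def2 mdeg_add)
  next
    case False
    then have d: "mdeg a = mdeg b" using ab by (auto simp: rl_def2)
    obtain i where i: "lk b i < lk a i" "\<forall>k>i. lk a k = lk b k" using rl_elim[OF ab d] by blast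
    have "mdeg (a + c) = mdeg (b + c)" by (simp add: mdeg_add d)
    moreover have "lk (b + c) i < lk (a + c) i" using i(1) by (simp add: lookup_add)
    moreover have "\<And>k. k > i \<Longrightarrow> lk (a + c) k = lk (b + c) k" using i(2) by (simp add: lookup_add)
    ultimately show ?thesis by (rule rl_intro)
  qed
qed

lemma exists_rl_max:
  assumes "finite K" "K \<noteq> {}"
  shows "\<exists>L\<in>K. \<forall>M\<in>K. M \<noteq> L \<longrightarrow> revlex_less M L"
  using assms
proof (induction K rule: finite_ne_induct)
  case (singleton x) then show ?case by auto
next
  case (insert x F)
  then obtain L where L: "L \<in> F" "\<forall>M\<in>F. M \<noteq> L \<longrightarrow> revlex_less M L" by blast
  show ?case
  proof (cases "revlex_less x L")
    case True
    have "\<forall>M\<in>insert x F. M \<noteq> L \<longrightarrow> revlex_less M L" using L True by blast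
    then show ?thesis using L(1) by blast
  next
    case False
    have "x \<noteq> L" using L insert.hyps by blast
    then have Lx: "revlex_less L x" using rl_total[OF \<open>x \<noteq> L\<close>] False by blast
    have "\<forall>M\<in>insert x F. M \<noteq> x \<longrightarrow> revlex_less M x"
    proof (intro ballI impI)
      fix M assume "M \<in> insert x F" "M \<noteq> x"
      then have "M \<in> F" by simp
      show "revlex_less M x"
      proof (cases "M = L")
        case True then show ?thesis using Lx by simp
      next
        case False then have "revlex_less M L" using L \<open>M \<in> F\<close> by blast
        then show ?thesis using rl_trans[OF _ Lx] by blast
      qed
    qed
    then show ?thesis by blast
  qed
qed

lemma lead_mon_eqI:
  assumes "L \<in> Poly_Mapping.keys p" "\<forall>M\<in>Poly_Mapping.keys p. M \<noteq> L \<longrightarrow> revlex_less M L"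
  shows "lead_mon p = L"
  unfolding lead_mon_def
proof (rule the_equality)
  show "L \<in> Poly_Mapping.keys p \<and> (\<forall>M\<in>Poly_Mapping.keys p. M \<noteq> L \<longrightarrow> revlex_less M L)"
    using assms by simp
next
  fix L' assume H: "L' \<in> Poly_Mapping.keys p \<and> (\<forall>M\<in>Poly_Mapping.keys p. M \<noteq> L' \<longrightarrow> revlex_less M L')"
  show "L' = L"
  proof (rule ccontr)
    assume ne: "L' \<noteq> L"
    have "revlex_less L' L" using assms(2) H ne by blast
    moreover have "revlex_less L L'" using assms(1) H ne by metis
    ultimately show False using rl_asym by auto
  qed
qed

lemma lead_mon_props:
  assumes "p \<noteq> 0"
  shows "lead_mon p \<in> Poly_Mapping.keys p \<and> (\<forall>M\<in>Poly_Mapping.keys p. M \<noteq> lead_mon p \<longrightarrow> revlex_less M (lead_mon p))"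
proof -
  have "Poly_Mapping.keys p \<noteq> {}" using assms by simp
  then obtain L where L: "L \<in> Poly_Mapping.keys p" "\<forall>M\<in>Poly_Mapping.keys p. M \<noteq> L \<longrightarrow> revlex_less M L"
    using exists_rl_max[OF finite_keys] by blast
  have "lead_mon p = L" using L by (rule lead_mon_eqI)
  then show ?thesis using L by simp
qed



definition ev :: "nat \<Rightarrow> monom" where "ev i = Poly_Mapping.single i 1"

lemma keys_ev: "Poly_Mapping.keys (ev i) = {i}" by (simp add: ev_def)
lemma lk_ev: "lk (ev i) k = (if k = i then 1 else 0)" by (simp add: ev_def lookup_single)

lemma keys_plus_nat: "Poly_Mapping.keys ((a::monom) + b) = Poly_Mapping.keys a \<union> Poly_Mapping.keys b"
proof (rule set_eqI)
  fix x show "x \<in> Poly_Mapping.keys (a + b) \<longleftrightarrow> x \<in> Poly_Mapping.keys a \<union> Poly_Mapping.keys b"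
    by (simp add: lookup_add flip: lookup_not_eq_zero_eq_in_keys)
qed

lemma Pn_zero: "0 \<in> Pn n" by (simp add: Pn_def)

lemma Pn_single: "Poly_Mapping.keys m \<subseteq> {..<n} \<Longrightarrow> Poly_Mapping.single m a \<in> Pn n"
  by (simp add: Pn_def)

lemma Pn_add: "p \<in> Pn n \<Longrightarrow> q \<in> Pn n \<Longrightarrow> p + q \<in> Pn n"
  unfolding Pn_def using keys_add[of p q] by blast

lemma Pn_mult: "p \<in> Pn n \<Longrightarrow> q \<in> Pn n \<Longrightarrow> p * q \<in> Pn n"
proof -
  assume p: "p \<in> Pn n" and q: "q \<in> Pn n"
  show ?thesis unfolding Pn_def
  proof (intro CollectI ballI)
    fix m assume "m \<in> Poly_Mapping.keys (p * q)"
    then obtain a b where ab: "m = a + b" "a \<in> Poly_Mapping.keys p" "b \<in> Poly_Mapping.keys q"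
      using keys_mult[of p q] by blast
    have "Poly_Mapping.keys a \<subseteq> {..<n}" using p ab by (simp add: Pn_def)
    moreover have "Poly_Mapping.keys b \<subseteq> {..<n}" using q ab by (simp add: Pn_def)
    ultimately show "Poly_Mapping.keys m \<subseteq> {..<n}" using ab(1) keys_plus_nat by simp
  qed
qed

lemma Pn_one: "1 \<in> Pn n"
  using Pn_single[of 0 n 1] by simp

lemma gi_zero: "0 \<in> gen_ideal n S"
  unfolding gen_ideal_def by (rule CollectI, rule exI[of _ "{}"]) simp

lemma gi_gen: "g \<in> S \<Longrightarrow> g \<in> gen_ideal n S"
  unfolding gen_ideal_def
  by (rule CollectI, rule exI[of _ "{g}"], rule exI[of _ "\<lambda>_. 1"]) (simp add: Pn_one)

lemma gi_add:
  assumes "p \<in> gen_ideal n S" "q \<in> gen_ideal n S"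
  shows "p + q \<in> gen_ideal n S"
proof -
  obtain F1 c1 where 1: "finite F1" "F1 \<subseteq> S" "\<forall>f\<in>F1. c1 f \<in> Pn n" "p = (\<Sum>f\<in>F1. c1 f * f)"
    using assms(1) unfolding gen_ideal_def by blast
  obtain F2 c2 where 2: "finite F2" "F2 \<subseteq> S" "\<forall>f\<in>F2. c2 f \<in> Pn n" "q = (\<Sum>f\<in>F2. c2 f * f)"
    using assms(2) unfolding gen_ideal_def by blast
  define c where "c f = (if f \<in> F1 then c1 f else 0) + (if f \<in> F2 then c2 f else 0)" for f
  have fin: "finite (F1 \<union> F2)" using 1 2 by simp
  have "(\<Sum>f\<in>F1 \<union> F2. c f * f) = (\<Sum>f\<in>F1 \<union> F2. (if f \<in> F1 then c1 f * f else 0)) + (\<Sum>f\<in>F1 \<union> F2. (if f \<in> F2 then c2 f * f else 0))"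
  proof -
    have "\<And>f. c f * f = (if f \<in> F1 then c1 f * f else 0) + (if f \<in> F2 then c2 f * f else 0)"
      by (simp add: c_def distrib_right)
    then show ?thesis by (simp only: sum.distrib)
  qed
  also have "(\<Sum>f\<in>F1 \<union> F2. (if f \<in> F1 then c1 f * f else 0)) = (\<Sum>f\<in>F1. c1 f * f)"
    using sum.inter_restrict[OF fin, of "\<lambda>f. c1 f * f" F1] by (simp add: Int_absorb1)
  also have "(\<Sum>f\<in>F1 \<union> F2. (if f \<in> F2 then c2 f * f else 0)) = (\<Sum>f\<in>F2. c2 f * f)"
    using sum.inter_restrict[OF fin, of "\<lambda>f. c2 f * f" F2] by (simp add: Int_absorb1)
  finally have eq: "p + q = (\<Sum>f\<in>F1 \<union> F2. c f * f)" using 1 2 by simp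
  have "\<forall>f\<in>F1 \<union> F2. c f \<in> Pn n"
    using 1 2 by (auto simp: c_def intro!: Pn_add Pn_zero)
  then have "finite (F1 \<union> F2) \<and> F1 \<union> F2 \<subseteq> S \<and> (\<forall>f\<in>F1 \<union> F2. c f \<in> Pn n) \<and> p + q = (\<Sum>f\<in>F1 \<union> F2. c f * f)"
    using eq fin 1 2 by simp
  then show ?thesis unfolding gen_ideal_def by (intro CollectI exI[where x="F1 \<union> F2"] exI[where x=c])
qed

lemma gi_mult:
  assumes "h \<in> Pn n" "p \<in> gen_ideal n S"
  shows "h * p \<in> gen_ideal n S"
proof -
  obtain F c where 1: "finite F" "F \<subseteq> S" "\<forall>f\<in>F. c f \<in> Pn n" "p = (\<Sum>f\<in>F. c f * f)"
    using assms(2) unfolding gen_ideal_def by blast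
  have "h * p = (\<Sum>f\<in>F. (h * c f) * f)" using 1 by (simp add: sum_distrib_left mult.assoc)
  moreover have "\<forall>f\<in>F. h * c f \<in> Pn n" using 1 assms(1) Pn_mult by blast
  ultimately have "finite F \<and> F \<subseteq> S \<and> (\<forall>f\<in>F. h * c f \<in> Pn n) \<and> h * p = (\<Sum>f\<in>F. (h * c f) * f)"
    using 1 by simp
  then show ?thesis unfolding gen_ideal_def by (intro CollectI exI[where x="F"] exI[where x="\<lambda>f. h * c f"])
qed

lemma gi_sum:
  assumes "\<forall>x\<in>A. p x \<in> gen_ideal n S"
  shows "(\<Sum>x\<in>A. p x) \<in> gen_ideal n S"
proof (cases "finite A")
  case True
  then show ?thesis using assms
    by (induction A rule: finite_induct) (auto intro: gi_add gi_zero)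
next
  case False then show ?thesis by (simp add: gi_zero)
qed

lemma gi_smult:
  "p \<in> gen_ideal n S \<Longrightarrow> Poly_Mapping.single 0 a * p \<in> gen_ideal n S"
  by (rule gi_mult) (simp_all add: Pn_single)

lemma gi_diff:
  fixes p q :: "'a::comm_ring_1 mpoly"
  assumes "p \<in> gen_ideal n S" "q \<in> gen_ideal n S"
  shows "p - q \<in> gen_ideal n S"
proof -
  have "Poly_Mapping.single 0 (-1) * q \<in> gen_ideal n S" using assms(2) by (rule gi_smult)
  moreover have "Poly_Mapping.single 0 (-1::'a) * q = - q" by (simp add: single_uminus)
  ultimately have "- q \<in> gen_ideal n S" by metis
  then have "p + - q \<in> gen_ideal n S" by (rule gi_add[OF assms(1)])
  then show ?thesis by (simp only: diff_conv_add_uminus)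
qed

lemma mon_mult: "mon a * mon b = (mon (a + b) :: 'a::comm_ring_1 mpoly)"
  by (simp add: mon_def mult_single)

lemma var_ev: "var i = mon (ev i)" by (simp add: var_def ev_def)

lemma In_var2: "i < n \<Longrightarrow> (var i ^ 2 :: 'a::comm_ring_1 mpoly) \<in> In n"
  unfolding In_def by (rule gi_gen) blast

lemma In_ell2: "((\<Sum>i<n. var i) ^ 2 :: 'a::comm_ring_1 mpoly) \<in> In n"
  unfolding In_def by (rule gi_gen) blast

lemma In_mult: "h \<in> Pn n \<Longrightarrow> p \<in> In n \<Longrightarrow> h * p \<in> In n"
  unfolding In_def by (rule gi_mult)

lemma In_mon_sq:
  assumes "Poly_Mapping.keys M \<subseteq> {..<n}" "lk M i \<ge> 2"
  shows "(mon M :: 'a::comm_ring_1 mpoly) \<in> In n"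
proof -
  have i: "i < n" using assms by (metis lessThan_iff not_in_keys_iff_lookup_eq_zero not_numeral_le_zero subsetD)
  define M' where "M' = M - ev i - ev i"
  have eq: "M = M' + (ev i + ev i)"
    by (rule poly_mapping_eqI) (use assms(2) in \<open>simp add: M'_def lookup_add lookup_minus lk_ev\<close>)
  have "Poly_Mapping.keys M' \<subseteq> Poly_Mapping.keys M" using eq keys_plus_nat by auto
  then have "mon M' \<in> (Pn n :: 'a mpoly set)" unfolding mon_def using assms(1) by (intro Pn_single) auto
  moreover have "(var i ^ 2 :: 'a mpoly) = mon (ev i + ev i)" by (simp add: var_ev power2_eq_square mon_mult)
  ultimately have "mon M' * mon (ev i + ev i) \<in> (In n :: 'a mpoly set)"
    using In_mult In_var2[OF i] by metis
  then show ?thesis using eq by (simp add: mon_mult)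
qed



definition Psi :: "(monom \<Rightarrow> 'a::comm_ring_1) \<Rightarrow> 'a mpoly \<Rightarrow> 'a" where
  "Psi \<phi> q = (\<Sum>M\<in>Poly_Mapping.keys q. lk q M * \<phi> M)"

lemma Psi_eq:
  assumes "finite K" "Poly_Mapping.keys q \<subseteq> K"
  shows "Psi \<phi> q = (\<Sum>M\<in>K. lk q M * \<phi> M)"
  unfolding Psi_def
  by (rule sum.mono_neutral_left[OF assms(1) assms(2)]) (simp add: not_in_keys_iff_lookup_eq_zero)

lemma Psi_add: "Psi \<phi> (p + q) = Psi \<phi> p + Psi \<phi> q"
proof -
  let ?K = "Poly_Mapping.keys p \<union> Poly_Mapping.keys q"
  have f: "finite ?K" by simp
  have "Psi \<phi> (p + q) = (\<Sum>M\<in>?K. lk (p + q) M * \<phi> M)"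
    by (rule Psi_eq[OF f keys_add])
  also have "\<dots> = (\<Sum>M\<in>?K. lk p M * \<phi> M) + (\<Sum>M\<in>?K. lk q M * \<phi> M)"
    by (simp add: lookup_add distrib_right sum.distrib)
  also have "(\<Sum>M\<in>?K. lk p M * \<phi> M) = Psi \<phi> p" by (rule Psi_eq[symmetric]) auto
  also have "(\<Sum>M\<in>?K. lk q M * \<phi> M) = Psi \<phi> q" by (rule Psi_eq[symmetric]) auto
  finally show ?thesis .
qed

lemma Psi_zero: "Psi \<phi> 0 = 0" by (simp add: Psi_def)

lemma Psi_sum: "Psi \<phi> (\<Sum>x\<in>A. p x) = (\<Sum>x\<in>A. Psi \<phi> (p x))"
proof (cases "finite A")
  case True then show ?thesis
    by (induction A rule: finite_induct) (simp_all add: Psi_zero Psi_add)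
next
  case False then show ?thesis by (simp add: Psi_zero)
qed

lemma Psi_single: "Psi \<phi> (Poly_Mapping.single M c) = c * \<phi> M"
proof -
  have "Psi \<phi> (Poly_Mapping.single M c) = (\<Sum>N\<in>{M}. lk (Poly_Mapping.single M c) N * \<phi> N)"
    by (rule Psi_eq) auto
  then show ?thesis by simp
qed

lemma poly_expand: "p = (\<Sum>M\<in>Poly_Mapping.keys p. Poly_Mapping.single M (lk p M))"
proof (rule poly_mapping_eqI)
  fix k
  have "lk (\<Sum>M\<in>Poly_Mapping.keys p. Poly_Mapping.single M (lk p M)) k
      = (\<Sum>M\<in>Poly_Mapping.keys p. lk (Poly_Mapping.single M (lk p M)) k)"
    by (rule lookup_sum)
  also have "\<dots> = (\<Sum>M\<in>Poly_Mapping.keys p. if M = k then lk p M else 0)"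
    by (rule sum.cong) (simp_all add: lookup_single when_def)
  also have "\<dots> = lk p k"
    by (simp add: not_in_keys_iff_lookup_eq_zero)
  finally show "lk p k = lk (\<Sum>M\<in>Poly_Mapping.keys p. Poly_Mapping.single M (lk p M)) k" by simp
qed

lemma Psi_mult_zero:
  assumes "\<And>M c. Psi \<phi> (Poly_Mapping.single M c * g) = 0"
  shows "Psi \<phi> (h * g) = 0"
proof -
  have "h * g = (\<Sum>M\<in>Poly_Mapping.keys h. Poly_Mapping.single M (lk h M) * g)"
    by (subst poly_expand[of h]) (simp add: sum_distrib_right)
  then have "Psi \<phi> (h * g) = (\<Sum>M\<in>Poly_Mapping.keys h. Psi \<phi> (Poly_Mapping.single M (lk h M) * g))"
    by (simp add: Psi_sum)
  also have "\<dots> = 0" using assms by simp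
  finally show ?thesis .
qed

lemma Psi_ideal:
  assumes "\<And>g M c. g \<in> S \<Longrightarrow> Psi \<phi> (Poly_Mapping.single M c * g) = 0"
    and "p \<in> gen_ideal n S"
  shows "Psi \<phi> (h * p) = 0"
proof -
  obtain F c where 1: "finite F" "F \<subseteq> S" "p = (\<Sum>f\<in>F. c f * f)"
    using assms(2) unfolding gen_ideal_def by blast
  have "h * p = (\<Sum>f\<in>F. (h * c f) * f)" using 1 by (simp add: sum_distrib_left mult.assoc)
  then have "Psi \<phi> (h * p) = (\<Sum>f\<in>F. Psi \<phi> ((h * c f) * f))" by (simp add: Psi_sum)
  also have "\<dots> = 0"
  proof (rule sum.neutral, rule ballI)
    fix f assume "f \<in> F"
    then have "f \<in> S" using 1 by blast
    show "Psi \<phi> ((h * c f) * f) = 0" by (rule Psi_mult_zero) (rule assms(1)[OF \<open>f \<in> S\<close>])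
  qed
  finally show ?thesis .
qed

lemma ell_expand: "((\<Sum>i<n. var i) ^ 2 :: 'a::comm_ring_1 mpoly) = (\<Sum>a<n. \<Sum>b<n. mon (ev a + ev b))"
  by (simp add: power2_eq_square sum_product var_ev mon_mult)

lemma single_mon: "Poly_Mapping.single M c * mon N = Poly_Mapping.single (M + N) (c::'a::comm_ring_1)"
  by (simp add: mon_def mult_single)

lemma Psi_In:
  fixes \<phi> :: "monom \<Rightarrow> 'a::comm_ring_1" and p h :: "'a mpoly"
  assumes sq: "\<And>M i. i < n \<Longrightarrow> \<phi> (M + ev i + ev i) = 0"
    and ell: "\<And>M. (\<Sum>a<n. \<Sum>b<n. \<phi> (M + ev a + ev b)) = 0"
    and "p \<in> In n"
  shows "Psi \<phi> (h * p) = 0"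
  using assms(3) unfolding In_def
proof (rule Psi_ideal[rotated])
  fix g :: "'a mpoly" and M c assume "g \<in> insert ((\<Sum>i<n. var i) ^ 2) {var i ^ 2 |i. i < n}"
  then consider "g = (\<Sum>i<n. var i) ^ 2" | i where "i < n" "g = var i ^ 2" by blast
  then show "Psi \<phi> (Poly_Mapping.single M c * g) = (0::'a)"
  proof cases
    case 1
    have "Poly_Mapping.single M c * g = (\<Sum>a<n. \<Sum>b<n. Poly_Mapping.single (M + ev a + ev b) c)"
      unfolding 1 ell_expand by (simp add: sum_distrib_left single_mon add.assoc)
    then have "Psi \<phi> (Poly_Mapping.single M c * g) = (\<Sum>a<n. \<Sum>b<n. c * \<phi> (M + ev a + ev b))"
      by (simp add: Psi_sum Psi_single)
    also have "\<dots> = c * (\<Sum>a<n. \<Sum>b<n. \<phi> (M + ev a + ev b))" by (simp add: sum_distrib_left)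
    finally show ?thesis using ell by simp
  next
    case 2
    have "Poly_Mapping.single M c * g = Poly_Mapping.single (M + ev i + ev i) c"
      unfolding 2 by (simp add: var_ev power2_eq_square mon_mult single_mon add.assoc)
    then show ?thesis using sq[OF 2(1)] by (simp add: Psi_single)
  qed
qed

lemma not_in_initial:
  fixes \<phi> :: "monom \<Rightarrow> 'a::field"
  assumes sq: "\<And>M i. i < n \<Longrightarrow> \<phi> (M + ev i + ev i) = 0"
    and ell: "\<And>M. (\<Sum>a<n. \<Sum>b<n. \<phi> (M + ev a + ev b)) = 0"
    and nz: "\<phi> \<nu> \<noteq> 0"
    and low: "\<And>M. revlex_less M \<nu> \<Longrightarrow> \<phi> M = 0"
  shows "(mon \<nu> :: 'a mpoly) \<notin> initial_ideal n (In n)"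
proof
  assume "(mon \<nu> :: 'a mpoly) \<in> initial_ideal n (In n)"
  then obtain F c where 1: "finite F" "F \<subseteq> {mon (lead_mon p) | p. (p::'a mpoly) \<in> In n \<and> p \<noteq> 0}"
      "(mon \<nu> :: 'a mpoly) = (\<Sum>f\<in>F. c f * f)"
    unfolding initial_ideal_def gen_ideal_def by blast
  have "lk (mon \<nu> :: 'a mpoly) \<nu> = 1" by (simp add: mon_def)
  then have "(\<Sum>f\<in>F. lk (c f * f) \<nu>) = 1" using 1(3) by (simp add: lookup_sum)
  then obtain f where f: "f \<in> F" "lk (c f * f) \<nu> \<noteq> 0"
    by (metis (mono_tags, lifting) one_neq_zero sum.neutral)
  then obtain p :: "'a mpoly" where p: "p \<in> In n" "p \<noteq> 0" "f = mon (lead_mon p)" using 1(2) by blast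
  define L where "L = lead_mon p"
  have Lp: "L \<in> Poly_Mapping.keys p" "\<And>M. M \<in> Poly_Mapping.keys p \<Longrightarrow> M \<noteq> L \<Longrightarrow> revlex_less M L"
    using lead_mon_props[OF p(2)] unfolding L_def by auto
  have "\<nu> \<in> Poly_Mapping.keys (c f * mon L)" using f p(3) unfolding L_def
    by (simp flip: lookup_not_eq_zero_eq_in_keys)
  then obtain a b where ab: "\<nu> = a + b" "b \<in> Poly_Mapping.keys (mon L :: 'a mpoly)"
    using keys_mult[of "c f" "mon L"] by blast
  have "b = L" using ab(2) by (simp add: mon_def)
  with ab have nuL: "\<nu> = a + L" by simp
  have "Psi \<phi> (Poly_Mapping.single a 1 * p) = 0" by (rule Psi_In[OF sq ell p(1)])
  moreover have "Poly_Mapping.single a 1 * p = (\<Sum>M\<in>Poly_Mapping.keys p. Poly_Mapping.single (a + M) (lk p M))"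
    by (subst poly_expand[of p]) (simp add: sum_distrib_left mult_single)
  ultimately have "(\<Sum>M\<in>Poly_Mapping.keys p. lk p M * \<phi> (a + M)) = 0"
    by (simp add: Psi_sum Psi_single)
  moreover have "(\<Sum>M\<in>Poly_Mapping.keys p. lk p M * \<phi> (a + M))
      = lk p L * \<phi> (a + L) + (\<Sum>M\<in>Poly_Mapping.keys p - {L}. lk p M * \<phi> (a + M))"
    by (rule sum.remove[OF finite_keys Lp(1)])
  moreover have "(\<Sum>M\<in>Poly_Mapping.keys p - {L}. lk p M * \<phi> (a + M)) = 0"
  proof (rule sum.neutral, rule ballI)
    fix M assume "M \<in> Poly_Mapping.keys p - {L}"
    then have "revlex_less M L" using Lp(2) by blast
    then have "revlex_less (M + a) (L + a)" by (rule rl_add)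
    then have "revlex_less (a + M) \<nu>" using nuL by (simp add: add.commute)
    then show "lk p M * \<phi> (a + M) = 0" using low by simp
  qed
  ultimately have "lk p L * \<phi> \<nu> = 0" using nuL by simp
  moreover have "lk p L \<noteq> 0" using Lp(1) by (simp flip: lookup_not_eq_zero_eq_in_keys)
  ultimately show False using nz by simp
qed



definition ind :: "nat set \<Rightarrow> monom" where "ind A = (\<Sum>i\<in>A. ev i)"

lemma lk_ind: "finite A \<Longrightarrow> lk (ind A) k = (if k \<in> A then 1 else 0)"
proof -
  assume "finite A"
  have "lk (ind A) k = (\<Sum>i\<in>A. lk (ev i) k)" unfolding ind_def by (rule lookup_sum)
  also have "\<dots> = (\<Sum>i\<in>A. if i = k then 1 else 0)" by (rule sum.cong) (auto simp: lk_ev)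
  also have "\<dots> = (if k \<in> A then 1 else 0)" using \<open>finite A\<close> by simp
  finally show ?thesis .
qed

lemma dbl0: "(x::'a::field_char_0) + x = 0 \<Longrightarrow> x = 0"
  by (metis mult_2 mult_eq_0_iff zero_neq_numeral)

locale gooddata =
  fixes n c :: nat and B :: "nat set" and \<beta> :: "nat \<Rightarrow> nat"
  assumes finB: "finite B"
    and injB: "inj_on \<beta> B"
    and beta_lt: "\<And>b. b \<in> B \<Longrightarrow> \<beta> b < b"
    and cB: "c \<notin> B"
    and disj: "\<And>b. b \<in> B \<Longrightarrow> \<beta> b \<notin> insert c B"
    and bound: "c < n" "\<And>b. b \<in> B \<Longrightarrow> b < n"
begin

definition U where "U = insert c (B \<union> \<beta> ` B)"

definition valid :: "monom \<Rightarrow> bool" where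
  "valid N \<longleftrightarrow> (\<forall>i. lk N i \<le> 1) \<and> (\<forall>i. lk N i \<noteq> 0 \<longrightarrow> i \<in> U) \<and> lk N c = 1
     \<and> (\<forall>b\<in>B. lk N b + lk N (\<beta> b) = 1)"

definition Z :: "monom \<Rightarrow> nat set" where "Z N = {b\<in>B. lk N b = 0}"

definition phi :: "monom \<Rightarrow> 'a::field" where
  "phi N = (if valid N then (-1) ^ card (Z N) else 0)"

definition pi :: "nat \<Rightarrow> nat" where
  "pi x = (if x \<in> B then \<beta> x else if x \<in> \<beta> ` B then the_inv_into B \<beta> x else x)"

lemma pi_B: "b \<in> B \<Longrightarrow> pi b = \<beta> b" by (simp add: pi_def)

lemma betaB_notB: "b \<in> B \<Longrightarrow> \<beta> b \<notin> B" using disj by blast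

lemma pi_beta: "b \<in> B \<Longrightarrow> pi (\<beta> b) = b"
  using betaB_notB[of b] injB by (simp add: pi_def the_inv_into_f_f)

lemma finU: "finite U" unfolding U_def using finB by simp

lemma U_bound: "x \<in> U \<Longrightarrow> x < n"
  unfolding U_def using bound beta_lt by (auto intro: less_trans)

lemma Uc_cases:
  assumes "x \<in> U - {c}"
  obtains (isB) b0 where "b0 \<in> B" "x = b0" "pi x = \<beta> b0"
    | (isBeta) b0 where "b0 \<in> B" "x = \<beta> b0" "pi x = b0"
  using assms unfolding U_def using pi_B pi_beta by blast

lemma pi_U: "x \<in> U - {c} \<Longrightarrow> pi x \<in> U - {c}"
proof -
  assume x: "x \<in> U - {c}"
  then show ?thesis
  proof (cases rule: Uc_cases)
    case (isB b0) then show ?thesis using disj unfolding U_def by auto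
  next
    case (isBeta b0) then show ?thesis using cB unfolding U_def by auto
  qed
qed

lemma pi_pi: "x \<in> U - {c} \<Longrightarrow> pi (pi x) = x"
proof -
  assume x: "x \<in> U - {c}"
  then show ?thesis
  proof (cases rule: Uc_cases)
    case (isB b0) then show ?thesis using pi_beta by simp
  next
    case (isBeta b0) then show ?thesis using pi_B by simp
  qed
qed

lemma swap_core:
  assumes b0: "b0 \<in> B"
    and xy: "(x = b0 \<and> y = \<beta> b0) \<or> (x = \<beta> b0 \<and> y = b0)"
    and v: "valid (K + ev x)"
  shows "valid (K + ev y) \<and> card (Z (K + ev y)) + card (Z (K + ev x)) = 2 * min (card (Z (K + ev y))) (card (Z (K + ev x))) + 1"
proof -
  define N where "N = K + ev x"
  define N' where "N' = K + ev y"
  have xy_ne: "x \<noteq> y" using xy beta_lt[OF b0] by auto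
  have lkN: "lk N i = lk K i + (if i = x then 1 else 0)" for i by (simp add: N_def lookup_add lk_ev)
  have lkN': "lk N' i = lk K i + (if i = y then 1 else 0)" for i by (simp add: N'_def lookup_add lk_ev)
  have v1: "\<forall>i. lk N i \<le> 1" and v2: "\<forall>i. lk N i \<noteq> 0 \<longrightarrow> i \<in> U" and v3: "lk N c = 1"
    and v4: "\<forall>b\<in>B. lk N b + lk N (\<beta> b) = 1"
    using v unfolding valid_def N_def by auto
  have Kx: "lk K x = 0" using v1 lkN[of x] by (metis add_le_same_cancel2 le_zero_eq one_neq_zero)
  have pair: "lk N x + lk N y = 1" using v4 b0 xy by auto
  have Ky: "lk K y = 0" using pair lkN[of x] lkN[of y] xy_ne by simp
  have N'x: "lk N' x = 0" using lkN' Kx xy_ne by simp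
  have N'y: "lk N' y = 1" using lkN' Ky by simp
  have Nx: "lk N x = 1" using lkN Kx by simp
  have Ny: "lk N y = 0" using lkN Ky xy_ne by simp
  have same: "\<And>i. i \<noteq> x \<Longrightarrow> i \<noteq> y \<Longrightarrow> lk N' i = lk N i" using lkN lkN' by simp
  have cx: "c \<noteq> x" "c \<noteq> y" using xy cB disj[OF b0] b0 by auto
  have yU: "y \<in> U" using xy b0 unfolding U_def by auto
  have w1: "\<forall>i. lk N' i \<le> 1"
    using v1 same N'x N'y by (metis le_zero_eq order_refl zero_le_one)
  have w2: "\<forall>i. lk N' i \<noteq> 0 \<longrightarrow> i \<in> U"
    using v2 same N'x yU by metis
  have w3: "lk N' c = 1" using same cx v3 by simp
  have w4: "\<forall>b\<in>B. lk N' b + lk N' (\<beta> b) = 1"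
  proof
    fix b assume b: "b \<in> B"
    show "lk N' b + lk N' (\<beta> b) = 1"
    proof (cases "b = b0")
      case True then show ?thesis using xy N'x N'y by auto
    next
      case False
      have "\<beta> b \<noteq> \<beta> b0" using injB b b0 False by (meson inj_on_contraD)
      moreover have "b \<noteq> \<beta> b0" using disj[OF b0] b by auto
      moreover have "\<beta> b \<noteq> b0" using disj[OF b] b0 by auto
      ultimately have "lk N' b = lk N b" "lk N' (\<beta> b) = lk N (\<beta> b)"
        using same xy False by auto
      then show ?thesis using v4 b by simp
    qed
  qed
  have val: "valid N'" unfolding valid_def using w1 w2 w3 w4 by blast
  have ZZ: "Z N' - {b0} = Z N - {b0}"
  proof -
    have "lk N' b = lk N b" if b: "b \<in> B" "b \<noteq> b0" for b
    proof -
      have "\<beta> b0 \<noteq> b" using disj[OF b0] b(1) by blast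
      then have "b \<noteq> x" "b \<noteq> y" using xy b(2) by auto
      then show ?thesis by (rule same)
    qed
    then show ?thesis unfolding Z_def by auto
  qed
  have fZ: "finite (Z N)" "finite (Z N')" unfolding Z_def using finB by auto
  have "(b0 \<in> Z N \<and> b0 \<notin> Z N') \<or> (b0 \<notin> Z N \<and> b0 \<in> Z N')"
    using xy Nx Ny N'x N'y b0 unfolding Z_def by auto
  then have "card (Z N') + card (Z N) = 2 * min (card (Z N')) (card (Z N)) + 1"
  proof
    assume h: "b0 \<in> Z N \<and> b0 \<notin> Z N'"
    then have "Z N' = Z N - {b0}" using ZZ by auto
    moreover have "card (Z N - {b0}) = card (Z N) - 1" using h by (simp add: card_Diff_singleton)
    moreover have "card (Z N) > 0" using h fZ card_gt_0_iff by blast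
    ultimately have "card (Z N') + 1 = card (Z N)" by simp
    then show ?thesis by simp
  next
    assume h: "b0 \<notin> Z N \<and> b0 \<in> Z N'"
    then have "Z N = Z N' - {b0}" using ZZ by auto
    moreover have "card (Z N' - {b0}) = card (Z N') - 1" using h by (simp add: card_Diff_singleton)
    moreover have "card (Z N') > 0" using h fZ card_gt_0_iff by blast
    ultimately have "card (Z N) + 1 = card (Z N')" by simp
    then show ?thesis by simp
  qed
  then show ?thesis using val unfolding N_def N'_def by simp
qed

lemma phi_swap:
  assumes "x \<in> U - {c}"
  shows "(phi (K + ev (pi x)) :: 'a::field) = - phi (K + ev x)"
proof -
  obtain b0 where b0: "b0 \<in> B" and xy: "(x = b0 \<and> pi x = \<beta> b0) \<or> (x = \<beta> b0 \<and> pi x = b0)"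
    using assms by (cases rule: Uc_cases) auto
  have xy': "(pi x = b0 \<and> x = \<beta> b0) \<or> (pi x = \<beta> b0 \<and> x = b0)" using xy by auto
  have sgn: "((-1::'a) ^ p = - ((-1) ^ q))" if "p + q = 2 * min p q + 1" for p q :: nat
  proof (cases "p \<le> q")
    case True then have "q = p + 1" using that by simp
    then show ?thesis by simp
  next
    case False then have "p = q + 1" using that by simp
    then show ?thesis by simp
  qed
  show ?thesis
  proof (cases "valid (K + ev x)")
    case True
    from swap_core[OF b0 xy True] show ?thesis
      unfolding phi_def using True sgn by simp
  next
    case False
    have "\<not> valid (K + ev (pi x))"
      using swap_core[OF b0 xy'] False by blast
    then show ?thesis unfolding phi_def using False by simp
  qed
qed

lemma valid_lk_pos_U: "valid N \<Longrightarrow> lk N i \<noteq> 0 \<Longrightarrow> i \<in> U"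
  unfolding valid_def by blast

lemma phi_sq: "(phi (M + ev i + ev i) :: 'a::field) = 0"
proof -
  have "lk (M + ev i + ev i) i \<ge> 2" by (simp add: lookup_add lk_ev)
  then have "\<not> valid (M + ev i + ev i)" unfolding valid_def by (metis numeral_le_one_iff semiring_norm(69) order_trans)
  then show ?thesis by (simp add: phi_def)
qed

lemma valid_pair:
  assumes "valid (M + ev a + ev b)"
  shows "a \<in> U - {c} \<or> b \<in> U - {c}"
proof -
  let ?N = "M + ev a + ev b"
  have "lk ?N a \<noteq> 0" by (simp add: lookup_add lk_ev)
  then have aU: "a \<in> U" using valid_lk_pos_U[OF assms] by blast
  have "lk ?N b \<noteq> 0" by (simp add: lookup_add lk_ev)
  then have bU: "b \<in> U" using valid_lk_pos_U[OF assms] by blast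
  have "\<not> (a = c \<and> b = c)"
  proof
    assume "a = c \<and> b = c"
    then have "lk ?N c \<ge> 2" by (simp add: lookup_add lk_ev)
    moreover have "lk ?N c = 1" using assms unfolding valid_def by blast
    ultimately show False by simp
  qed
  then show ?thesis using aU bU by blast
qed

definition sig :: "nat \<times> nat \<Rightarrow> nat \<times> nat" where
  "sig p = (if fst p \<in> U - {c} then (pi (fst p), snd p)
            else if snd p \<in> U - {c} then (fst p, pi (snd p)) else p)"

lemma sig_sig: "sig (sig p) = p"
proof -
  obtain a b where p: "p = (a, b)" by fastforce
  show ?thesis
  proof (cases "a \<in> U - {c}")
    case True
    then show ?thesis using pi_U[OF True] pi_pi[OF True] p by (auto simp: sig_def)
  next
    case False
    show ?thesis
    proof (cases "b \<in> U - {c}")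
      case True
      have 1: "sig p = (a, pi b)" using False True p by (auto simp: sig_def)
      have 2: "sig (a, pi b) = (a, pi (pi b))" using False pi_U[OF True] by (auto simp: sig_def)
      show ?thesis using 1 2 pi_pi[OF True] p by simp
    next
      case False2: False
      then show ?thesis using False p by (auto simp: sig_def)
    qed
  qed
qed

lemma sig_S: "p \<in> {..<n} \<times> {..<n} \<Longrightarrow> sig p \<in> {..<n} \<times> {..<n}"
proof -
  assume "p \<in> {..<n} \<times> {..<n}"
  moreover have "\<And>x. x \<in> U - {c} \<Longrightarrow> pi x < n" using pi_U U_bound by blast
  ultimately show ?thesis unfolding sig_def by (auto split: if_splits)
qed

lemma phi_sig:
  "(phi (M + ev (fst (sig p)) + ev (snd (sig p))) :: 'a::field) = - phi (M + ev (fst p) + ev (snd p))"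
proof -
  obtain a b where p: "p = (a, b)" by fastforce
  show ?thesis
  proof (cases "a \<in> U - {c}")
    case True
    have "(phi ((M + ev b) + ev (pi a)) :: 'a) = - phi ((M + ev b) + ev a)" by (rule phi_swap[OF True])
    then show ?thesis using True p by (simp add: sig_def ac_simps)
  next
    case False
    show ?thesis
    proof (cases "b \<in> U - {c}")
      case True
      have "(phi ((M + ev a) + ev (pi b)) :: 'a) = - phi ((M + ev a) + ev b)" by (rule phi_swap[OF True])
      then show ?thesis using True False p by (auto simp: sig_def)
    next
      case False2: False
      have "\<not> valid (M + ev a + ev b)" using valid_pair False False2 by blast
      then show ?thesis using False False2 p by (auto simp: sig_def phi_def)
    qed
  qed
qed

lemma phi_ell: "(\<Sum>a<n. \<Sum>b<n. (phi (M + ev a + ev b) :: 'a::field_char_0)) = 0"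
proof -
  define g :: "nat \<times> nat \<Rightarrow> 'a" where "g p = phi (M + ev (fst p) + ev (snd p))" for p
  let ?S = "{..<n} \<times> {..<n}"
  have "(\<Sum>a<n. \<Sum>b<n. (phi (M + ev a + ev b) :: 'a)) = sum g ?S"
    unfolding g_def by (simp add: sum.cartesian_product case_prod_beta')
  moreover have "sum (\<lambda>p. g (sig p)) ?S = sum g ?S"
    by (rule sum.reindex_bij_witness[where i=sig and j=sig]) (auto simp: sig_sig sig_S)
  moreover have "sum (\<lambda>p. g (sig p)) ?S = - sum g ?S"
    unfolding g_def by (simp add: phi_sig sum_negf)
  ultimately have h: "sum g ?S = - sum g ?S" by simp
  have "sum g ?S + sum g ?S = 0" using h by (metis add.right_inverse)
  then have "sum g ?S = 0" by (rule dbl0)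
  then show ?thesis using \<open>(\<Sum>a<n. \<Sum>b<n. (phi (M + ev a + ev b) :: 'a)) = sum g ?S\<close> by simp
qed

definition V where "V = insert c B"

lemma finV: "finite V" unfolding V_def using finB by simp

lemma lk_indV: "lk (ind V) i = (if i \<in> V then 1 else 0)" by (rule lk_ind[OF finV])

lemma inV: "x \<in> V \<longleftrightarrow> x = c \<or> x \<in> B" by (simp add: V_def)

lemma V_U: "V \<subseteq> U" unfolding V_def U_def by auto

lemma valid_indV: "valid (ind V)"
proof -
  have "\<forall>b\<in>B. lk (ind V) b + lk (ind V) (\<beta> b) = 1"
    using disj by (simp add: lk_indV inV)
  moreover have "\<forall>i. lk (ind V) i \<noteq> 0 \<longrightarrow> i \<in> U" using V_U by (auto simp: lk_indV)
  ultimately show ?thesis unfolding valid_def by (simp add: lk_indV inV)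
qed

lemma Z_indV: "Z (ind V) = {}"
  unfolding Z_def by (auto simp: lk_indV inV)

lemma phi_nu: "(phi (ind V) :: 'a::field) = 1"
  using valid_indV Z_indV by (simp add: phi_def)

lemma mdeg_valid:
  assumes "valid N"
  shows "mdeg N = card B + 1"
proof -
  have keysU: "Poly_Mapping.keys N \<subseteq> U"
    using valid_lk_pos_U[OF assms] by (auto simp flip: lookup_not_eq_zero_eq_in_keys)
  have "mdeg N = (\<Sum>i\<in>U. lk N i)" by (rule mdeg_sum[OF finU keysU])
  also have "\<dots> = lk N c + (\<Sum>i\<in>B \<union> \<beta> ` B. lk N i)"
  proof -
    have "c \<notin> B \<union> \<beta> ` B" using cB disj by auto
    then show ?thesis unfolding U_def using finB by (simp add: sum.insert)
  qed
  also have "(\<Sum>i\<in>B \<union> \<beta> ` B. lk N i) = (\<Sum>i\<in>B. lk N i) + (\<Sum>i\<in>\<beta> ` B. lk N i)"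
    by (rule sum.union_disjoint) (use finB disj in auto)
  also have "(\<Sum>i\<in>\<beta> ` B. lk N i) = (\<Sum>b\<in>B. lk N (\<beta> b))"
    by (simp add: sum.reindex[OF injB])
  also have "(\<Sum>i\<in>B. lk N i) + (\<Sum>b\<in>B. lk N (\<beta> b)) = (\<Sum>b\<in>B. lk N b + lk N (\<beta> b))"
    by (simp add: sum.distrib)
  also have "\<dots> = (\<Sum>b\<in>B. 1)" using assms unfolding valid_def by simp
  finally show ?thesis using assms unfolding valid_def by simp
qed

lemma valid_gt:
  assumes v: "valid M" and ne: "M \<noteq> ind V"
  shows "revlex_less (ind V) M"
proof -
  let ?D = "dset (ind V) M"
  have Dne: "?D \<noteq> {}" using ne dset_ne by metis
  define i0 where "i0 = Max ?D"
  have i0D: "i0 \<in> ?D" unfolding i0_def using Max_in[OF finite_dset Dne] .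
  have above: "\<And>k. k > i0 \<Longrightarrow> lk (ind V) k = lk M k"
  proof -
    fix k assume "k > i0"
    then have "k \<notin> ?D" unfolding i0_def using Max_ge[OF finite_dset] by force
    then show "lk (ind V) k = lk M k" by (simp add: dset_def)
  qed
  have neq: "lk (ind V) i0 \<noteq> lk M i0" using i0D by (simp add: dset_def)
  have i0U: "i0 \<in> U"
  proof (rule ccontr)
    assume "i0 \<notin> U"
    then have "lk M i0 = 0" using valid_lk_pos_U[OF v] by blast
    moreover have "lk (ind V) i0 = 0" using \<open>i0 \<notin> U\<close> V_U by (auto simp: lk_indV)
    ultimately show False using neq by simp
  qed
  have "i0 \<noteq> c"
  proof
    assume "i0 = c"
    then have "lk M i0 = 1" using v unfolding valid_def by simp
    moreover have "lk (ind V) i0 = 1" using \<open>i0 = c\<close> by (simp add: lk_indV inV)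
    ultimately show False using neq by simp
  qed
  have i0B: "i0 \<in> B"
  proof (rule ccontr)
    assume "i0 \<notin> B"
    then obtain b where b: "b \<in> B" "i0 = \<beta> b" using i0U \<open>i0 \<noteq> c\<close> unfolding U_def by blast
    have "lk (ind V) i0 = 0" using disj[OF b(1)] b(2) by (simp add: lk_indV inV)
    then have "lk M i0 \<noteq> 0" using neq by simp
    moreover have "lk M i0 \<le> 1" using v unfolding valid_def by blast
    ultimately have "lk M i0 = 1" by linarith
    then have "lk M b = 0" using v b unfolding valid_def by fastforce
    moreover have "lk (ind V) b = 1" using b(1) by (simp add: lk_indV inV)
    ultimately have "lk (ind V) b \<noteq> lk M b" by simp
    moreover have "b > i0" using beta_lt[OF b(1)] b(2) by simp
    ultimately show False using above by simp
  qed
  have "lk (ind V) i0 = 1" using i0B by (simp add: lk_indV inV)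
  moreover have "lk M i0 \<le> 1" using v unfolding valid_def by blast
  ultimately have "lk M i0 = 0" using neq by linarith
  then have lt: "lk M i0 < lk (ind V) i0" using \<open>lk (ind V) i0 = 1\<close> by simp
  have "mdeg (ind V) = mdeg M" using mdeg_valid[OF v] mdeg_valid[OF valid_indV] by simp
  then show ?thesis using rl_intro lt above by blast
qed

lemma phi_low: "revlex_less M (ind V) \<Longrightarrow> (phi M :: 'a::field) = 0"
proof -
  assume lt: "revlex_less M (ind V)"
  show ?thesis
  proof (cases "valid M")
    case True
    have "M \<noteq> ind V" using lt rl_irrefl by metis
    then have "revlex_less (ind V) M" using valid_gt True by blast
    then show ?thesis using lt rl_asym by blast
  next
    case False then show ?thesis by (simp add: phi_def)
  qed
qed

lemma good_not_in: "(mon (ind V) :: 'a::field_char_0 mpoly) \<notin> initial_ideal n (In n)"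
proof (rule not_in_initial[where \<phi>=phi])
  show "\<And>M i. i < n \<Longrightarrow> (phi (M + ev i + ev i) :: 'a) = 0" by (rule phi_sq)
  show "\<And>M. (\<Sum>a<n. \<Sum>b<n. (phi (M + ev a + ev b) :: 'a)) = 0" by (rule phi_ell)
  show "(phi (ind V) :: 'a) \<noteq> 0" by (simp add: phi_nu)
  show "\<And>M. revlex_less M (ind V) \<Longrightarrow> (phi M :: 'a) = 0" by (rule phi_low)
qed

end



lemma lk_smult: "lk (Poly_Mapping.single 0 c * q) N = (c::'a::comm_ring_1) * lk q N"
proof -
  have "Poly_Mapping.single 0 c * q = (\<Sum>M\<in>Poly_Mapping.keys q. Poly_Mapping.single M (c * lk q M))"
    by (subst poly_expand[of q]) (simp add: sum_distrib_left mult_single)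
  then have "lk (Poly_Mapping.single 0 c * q) N = (\<Sum>M\<in>Poly_Mapping.keys q. lk (Poly_Mapping.single M (c * lk q M)) N)"
    by (simp add: lookup_sum)
  also have "\<dots> = (\<Sum>M\<in>Poly_Mapping.keys q. if M = N then c * lk q M else 0)"
    by (rule sum.cong) (simp_all add: lookup_single when_def)
  also have "\<dots> = c * lk q N" by (simp add: not_in_keys_iff_lookup_eq_zero)
  finally show ?thesis .
qed

lemma lk_mon: "lk (mon M :: 'a::comm_ring_1 mpoly) N = (if M = N then 1 else 0)"
  by (simp add: mon_def lookup_single when_def)

lemma ind_insert: "finite A \<Longrightarrow> x \<notin> A \<Longrightarrow> ind (insert x A) = ev x + ind A"
  by (simp add: ind_def)

lemma ind_inj: "finite A \<Longrightarrow> finite A' \<Longrightarrow> ind A = ind A' \<Longrightarrow> A = A'"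
proof -
  assume f: "finite A" "finite A'" and e: "ind A = ind A'"
  show "A = A'"
  proof (rule set_eqI)
    fix x
    have "lk (ind A) x = lk (ind A') x" using e by simp
    then show "x \<in> A \<longleftrightarrow> x \<in> A'" using lk_ind[OF f(1)] lk_ind[OF f(2)] by (metis one_neq_zero)
  qed
qed

lemma keys_ind: "finite A \<Longrightarrow> Poly_Mapping.keys (ind A) = A"
  by (auto simp: lk_ind split: if_splits simp flip: lookup_not_eq_zero_eq_in_keys)

lemma mdeg_ind: "finite A \<Longrightarrow> mdeg (ind A) = card A"
proof -
  assume f: "finite A"
  have "mdeg (ind A) = (\<Sum>i\<in>A. lk (ind A) i)" by (rule mdeg_sum[OF f]) (simp add: keys_ind f)
  also have "\<dots> = (\<Sum>i\<in>A. 1)" using f by (simp add: lk_ind)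
  finally show ?thesis by simp
qed

lemma ind_pair: "finite P \<Longrightarrow> a \<noteq> b \<Longrightarrow> a \<notin> P \<Longrightarrow> b \<notin> P \<Longrightarrow> ind P + ev a + ev b = ind (insert a (insert b P))"
  by (simp add: ind_insert ac_simps)

lemma ind_pair_iff:
  assumes "finite P" "finite R'"
  shows "(a \<noteq> b \<and> a \<notin> P \<and> b \<notin> P \<and> ind P + ev a + ev b = ind R') \<longleftrightarrow>
         (a \<in> R' \<and> b \<in> R' \<and> a \<noteq> b \<and> P = R' - {a, b})"
proof
  assume h: "a \<noteq> b \<and> a \<notin> P \<and> b \<notin> P \<and> ind P + ev a + ev b = ind R'"
  then have "ind (insert a (insert b P)) = ind R'" using ind_pair assms by metis
  then have "insert a (insert b P) = R'" using ind_inj assms by simp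
  then show "a \<in> R' \<and> b \<in> R' \<and> a \<noteq> b \<and> P = R' - {a, b}" using h by auto
next
  assume h: "a \<in> R' \<and> b \<in> R' \<and> a \<noteq> b \<and> P = R' - {a, b}"
  then have "insert a (insert b P) = R'" by auto
  moreover have "a \<notin> P" "b \<notin> P" using h by auto
  ultimately show "a \<noteq> b \<and> a \<notin> P \<and> b \<notin> P \<and> ind P + ev a + ev b = ind R'"
    using ind_pair[OF assms(1)] h by metis
qed

function fc :: "nat \<Rightarrow> nat \<Rightarrow> 'a::field" where
  "fc m k = (if m < k + 2 then 0 else
     (of_bool (k + 2 = m) - 2 * of_nat ((k + 2) * (m - k - 2)) * fc m (k + 1)
       - of_nat ((m - k - 2) * (m - k - 3)) * fc m (k + 2)) / of_nat ((k + 2) * (k + 1)))"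
  by pat_completeness auto
termination by (relation "measure (\<lambda>(m, k). m - k)") auto

declare fc.simps[simp del]

lemma fc_zero: "m < k + 2 \<Longrightarrow> fc m k = 0"
  by (subst fc.simps) simp

lemma fc_eq:
  assumes "2 \<le> s" "s \<le> m"
  shows "of_nat (s * (s - 1)) * (fc m (s - 2) :: 'a::field_char_0) + of_nat (2 * s * (m - s)) * fc m (s - 1)
        + of_nat ((m - s) * (m - s - 1)) * fc m s = of_bool (s = m)"
proof -
  define k where "k = s - 2"
  have s: "s = k + 2" using assms k_def by simp
  define P where "P = (k + 2) * (k + 1)"
  define Q where "Q = (k + 2) * (m - k - 2)"
  define Rr where "Rr = (m - k - 2) * (m - k - 3)"
  define X where "X = (fc m k :: 'a)"
  define Y where "Y = (fc m (k + 1) :: 'a)"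
  define W where "W = (fc m (k + 2) :: 'a)"
  have nz: "(of_nat P :: 'a) \<noteq> 0" unfolding P_def by (simp only: of_nat_eq_0_iff) simp
  have "X = (of_bool (k + 2 = m) - 2 * of_nat Q * Y - of_nat Rr * W) / (of_nat P :: 'a)"
    unfolding X_def Y_def W_def P_def Q_def Rr_def using assms s by (subst fc.simps) simp
  then have eq: "of_nat P * X = of_bool (k + 2 = m) - 2 * of_nat Q * Y - of_nat Rr * W"
    using nz by (simp add: field_simps)
  have 1: "s * (s - 1) = P" "2 * s * (m - s) = 2 * Q" "(m - s) * (m - s - 1) = Rr"
  proof -
    have e1: "s - 1 = k + 1" "m - s = m - k - 2" "m - s - 1 = m - k - 3" using s by arith+
    show "s * (s - 1) = P" unfolding P_def e1 using s by simp
    show "2 * s * (m - s) = 2 * Q" unfolding Q_def e1 using s by simp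
    show "(m - s) * (m - s - 1) = Rr" unfolding Rr_def using e1(2,3) by metis
  qed
  have 2: "fc m (s - 2) = X" "fc m (s - 1) = Y" "fc m s = W"
    unfolding X_def Y_def W_def using s by simp_all
  show ?thesis unfolding 1 2 using eq s by (simp add: algebra_simps)
qed

lemma ring_id:
  "of_nat x * (of_nat z * F2 + of_nat y * F1) + of_nat y * (of_nat x * F1 + of_nat w * F0)
   = of_nat (x * z) * F2 + of_nat (2 * x * y) * F1 + of_nat (y * w) * (F0 :: 'a::comm_ring_1)"
  by (simp only: of_nat_mult of_nat_numeral) (simp add: algebra_simps)

lemma pair_count:
  fixes F :: "nat \<Rightarrow> 'a::comm_ring_1"
  assumes f: "finite R'"
  shows "(\<Sum>a\<in>R'. \<Sum>b\<in>R' - {a}. F (of_bool (a \<in> R) + of_bool (b \<in> R)))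
       = of_nat (card (R' \<inter> R) * (card (R' \<inter> R) - 1)) * F 2
         + of_nat (2 * card (R' \<inter> R) * card (R' - R)) * F 1
         + of_nat (card (R' - R) * (card (R' - R) - 1)) * F 0"
proof -
  define A where "A = R' \<inter> R"
  define C where "C = R' - R"
  have fA: "finite A" and fC: "finite C" using f by (auto simp: A_def C_def)
  have R'AC: "R' = A \<union> C" and dAC: "A \<inter> C = {}" by (auto simp: A_def C_def)
  have inner_A: "(\<Sum>b\<in>R' - {a}. F (of_bool (a \<in> R) + of_bool (b \<in> R)))
      = of_nat (card A - 1) * F 2 + of_nat (card C) * F 1" if a: "a \<in> A" for a
  proof -
    have "R' - {a} = (A - {a}) \<union> C" using a R'AC dAC by auto
    then have "(\<Sum>b\<in>R' - {a}. F (of_bool (a \<in> R) + of_bool (b \<in> R)))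
       = (\<Sum>b\<in>(A - {a}) \<union> C. F (of_bool (a \<in> R) + of_bool (b \<in> R)))" by simp
    also have "\<dots> = (\<Sum>b\<in>A - {a}. F (of_bool (a \<in> R) + of_bool (b \<in> R))) + (\<Sum>b\<in>C. F (of_bool (a \<in> R) + of_bool (b \<in> R)))"
      by (rule sum.union_disjoint) (use fA fC dAC in auto)
    also have "(\<Sum>b\<in>A - {a}. F (of_bool (a \<in> R) + of_bool (b \<in> R))) = (\<Sum>b\<in>A - {a}. F 2)"
      using a by (intro sum.cong) (auto simp: A_def numeral_2_eq_2)
    also have "(\<Sum>b\<in>C. F (of_bool (a \<in> R) + of_bool (b \<in> R))) = (\<Sum>b\<in>C. F 1)"
      using a by (intro sum.cong) (auto simp: A_def C_def)
    finally show ?thesis using a fA by (simp add: card_Diff_singleton)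
  qed
  have inner_C: "(\<Sum>b\<in>R' - {a}. F (of_bool (a \<in> R) + of_bool (b \<in> R)))
      = of_nat (card A) * F 1 + of_nat (card C - 1) * F 0" if a: "a \<in> C" for a
  proof -
    have "R' - {a} = A \<union> (C - {a})" using a R'AC dAC by auto
    then have "(\<Sum>b\<in>R' - {a}. F (of_bool (a \<in> R) + of_bool (b \<in> R)))
       = (\<Sum>b\<in>A \<union> (C - {a}). F (of_bool (a \<in> R) + of_bool (b \<in> R)))" by simp
    also have "\<dots> = (\<Sum>b\<in>A. F (of_bool (a \<in> R) + of_bool (b \<in> R))) + (\<Sum>b\<in>C - {a}. F (of_bool (a \<in> R) + of_bool (b \<in> R)))"
      by (rule sum.union_disjoint) (use fA fC dAC in auto)
    also have "(\<Sum>b\<in>A. F (of_bool (a \<in> R) + of_bool (b \<in> R))) = (\<Sum>b\<in>A. F 1)"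
      using a by (intro sum.cong) (auto simp: A_def C_def)
    also have "(\<Sum>b\<in>C - {a}. F (of_bool (a \<in> R) + of_bool (b \<in> R))) = (\<Sum>b\<in>C - {a}. F 0)"
      using a by (intro sum.cong) (auto simp: C_def)
    finally show ?thesis using a fC by (simp add: card_Diff_singleton)
  qed
  have "(\<Sum>a\<in>R'. \<Sum>b\<in>R' - {a}. F (of_bool (a \<in> R) + of_bool (b \<in> R)))
      = (\<Sum>a\<in>A. \<Sum>b\<in>R' - {a}. F (of_bool (a \<in> R) + of_bool (b \<in> R)))
        + (\<Sum>a\<in>C. \<Sum>b\<in>R' - {a}. F (of_bool (a \<in> R) + of_bool (b \<in> R)))"
    unfolding R'AC by (rule sum.union_disjoint) (use fA fC dAC in auto)
  also have "\<dots> = (\<Sum>a\<in>A. of_nat (card A - 1) * F 2 + of_nat (card C) * F 1)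
        + (\<Sum>a\<in>C. of_nat (card A) * F 1 + of_nat (card C - 1) * F 0)"
    using inner_A inner_C by simp
  also have "\<dots> = of_nat (card A) * (of_nat (card A - 1) * F 2 + of_nat (card C) * F 1)
        + of_nat (card C) * (of_nat (card A) * F 1 + of_nat (card C - 1) * F 0)"
    by simp
  also have "\<dots> = of_nat (card A * (card A - 1)) * F 2 + of_nat (2 * card A * card C) * F 1
        + of_nat (card C * (card C - 1)) * F 0"
    by (rule ring_id)
  finally show ?thesis unfolding A_def C_def .
qed



lemma card_rm2:
  assumes "finite X" "a \<noteq> b"
  shows "card (X - {a, b}) = card X - of_bool (a \<in> X) - of_bool (b \<in> X)"
proof -
  have "X - {a, b} = (X - {a}) - {b}" by auto
  moreover have "b \<in> X - {a} \<longleftrightarrow> b \<in> X" using assms(2) by auto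
  ultimately show ?thesis using assms(1) by (simp add: card_Diff_singleton_if)
qed

locale baddata =
  fixes n j m :: nat and R :: "nat set"
  assumes Rsub: "R \<subseteq> {..<j}" and jn: "j \<le> n" and cardR: "card R = m"
    and m2: "2 \<le> m" and jm: "j + 2 \<le> 2 * m"
begin

lemma finR: "finite R" using Rsub finite_subset by blast

definition PP where "PP = {P. P \<subseteq> {..<j} \<and> card P = m - 2}"

definition cnd :: "nat set \<Rightarrow> nat \<Rightarrow> nat \<Rightarrow> bool" where
  "cnd P a b \<longleftrightarrow> a \<noteq> b \<and> a \<notin> P \<and> b \<notin> P"

definition G :: "nat set \<Rightarrow> 'a::comm_ring_1 mpoly" where
  "G P = (\<Sum>a<n. \<Sum>b<n. if cnd P a b then mon (ind P + ev a + ev b) else 0)"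

definition pp :: "'a::field mpoly" where
  "pp = (\<Sum>P\<in>PP. Poly_Mapping.single 0 (fc m (card (P \<inter> R))) * G P)"

lemma finPP: "finite PP"
proof -
  have "PP \<subseteq> Pow {..<j}" unfolding PP_def by auto
  then show ?thesis by (rule finite_subset) simp
qed

lemma PP_fin: "P \<in> PP \<Longrightarrow> finite P"
  unfolding PP_def using finite_subset by blast

lemma G_in:
  assumes P: "P \<in> PP"
  shows "(G P :: 'a::comm_ring_1 mpoly) \<in> In n"
proof -
  have fP: "finite P" using PP_fin[OF P] .
  have Pn': "P \<subseteq> {..<n}" using P jn unfolding PP_def by auto
  have e1: "(mon (ind P) :: 'a mpoly) * (\<Sum>i<n. var i) ^ 2 = (\<Sum>a<n. \<Sum>b<n. mon (ind P + ev a + ev b))"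
    by (simp add: ell_expand sum_distrib_left mon_mult add.assoc)
  have X: "(mon (ind P) :: 'a mpoly) * (\<Sum>i<n. var i) ^ 2 \<in> In n"
  proof (rule In_mult)
    show "(mon (ind P) :: 'a mpoly) \<in> Pn n" unfolding mon_def using Pn' by (intro Pn_single) (simp add: keys_ind fP)
  qed (rule In_ell2)
  define Y :: "'a mpoly" where "Y = (\<Sum>a<n. \<Sum>b<n. if cnd P a b then 0 else mon (ind P + ev a + ev b))"
  have Y: "Y \<in> In n"
    unfolding Y_def In_def
  proof (intro gi_sum ballI)
    fix a b assume a: "a \<in> {..<n}" and b: "b \<in> {..<n}"
    show "(if cnd P a b then 0 else (mon (ind P + ev a + ev b) :: 'a mpoly)) \<in> gen_ideal n (insert ((\<Sum>i<n. var i) ^ 2) {var i ^ 2 |i. i < n})"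
    proof (cases "cnd P a b")
      case True then show ?thesis by (simp add: gi_zero)
    next
      case False
      let ?N = "ind P + ev a + ev b"
      have keys: "Poly_Mapping.keys ?N \<subseteq> {..<n}"
        using keys_plus_nat[of "ind P + ev a" "ev b"] keys_plus_nat[of "ind P" "ev a"] keys_ind[OF fP] keys_ev Pn' a b
        by auto
      have lkN: "lk ?N i = (if i \<in> P then 1 else 0) + (if i = a then 1 else 0) + (if i = b then 1 else 0)" for i
        by (simp add: lookup_add lk_ev lk_ind[OF fP])
      obtain i where "lk ?N i \<ge> 2"
      proof (cases "a = b")
        case True then show ?thesis using that[of a] lkN[of a] by simp
      next
        case False
        then have "a \<in> P \<or> b \<in> P" using \<open>\<not> cnd P a b\<close> unfolding cnd_def by blast
        then show ?thesis
        proof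
          assume "a \<in> P" then have "lk ?N a \<ge> 2" using lkN[of a] by simp
          then show ?thesis by (rule that)
        next
          assume "b \<in> P" then have "lk ?N b \<ge> 2" using lkN[of b] by simp
          then show ?thesis by (rule that)
        qed
      qed
      then have "(mon ?N :: 'a mpoly) \<in> In n" using In_mon_sq[OF keys] by blast
      then show ?thesis using False by (simp add: In_def)
    qed
  qed
  have "G P = (mon (ind P) :: 'a mpoly) * (\<Sum>i<n. var i) ^ 2 - Y"
  proof -
    have "\<And>a b. (if cnd P a b then (mon (ind P + ev a + ev b) :: 'a mpoly) else 0)
       = mon (ind P + ev a + ev b) - (if cnd P a b then 0 else mon (ind P + ev a + ev b))" by simp
    then show ?thesis unfolding G_def Y_def e1 by (simp add: sum_subtractf)
  qed
  then show ?thesis using gi_diff[of _ n] X Y unfolding In_def by simp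
qed

lemma pp_in: "(pp :: 'a::field mpoly) \<in> In n"
  unfolding pp_def In_def
  by (intro gi_sum ballI gi_smult) (use G_in in \<open>simp add: In_def\<close>)

lemma lk_G: "lk (G P :: 'a::comm_ring_1 mpoly) N = (\<Sum>a<n. \<Sum>b<n. if cnd P a b \<and> ind P + ev a + ev b = N then 1 else 0)"
  unfolding G_def lookup_sum by (intro sum.cong refl) (auto simp: lk_mon)

lemma lk_pp: "lk (pp :: 'a::field mpoly) N = (\<Sum>P\<in>PP. fc m (card (P \<inter> R)) * lk (G P :: 'a mpoly) N)"
  unfolding pp_def by (simp add: lookup_sum lk_smult)

lemma pp_support:
  assumes "lk (pp :: 'a::field mpoly) N \<noteq> 0"
  shows "\<exists>P\<in>PP. \<exists>a<n. \<exists>b<n. cnd P a b \<and> N = ind P + ev a + ev b"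
proof (rule ccontr)
  assume h: "\<not> ?thesis"
  have z: "(\<Sum>a<n. \<Sum>b<n. if cnd P a b \<and> ind P + ev a + ev b = N then 1 else (0::'a)) = 0" if "P \<in> PP" for P
    by (intro sum.neutral ballI) (use h that in auto)
  have "lk (pp :: 'a mpoly) N = 0"
    unfolding lk_pp lk_G by (intro sum.neutral ballI) (simp add: z)
  then show False using assms by simp
qed

lemma card_diff_R: "card ({..<j} - R) = j - m"
  using Rsub cardR by (simp add: card_Diff_subset finR)

lemma pp_val:
  assumes R'sub: "R' \<subseteq> {..<j}" and cR': "card R' = m"
  shows "lk (pp :: 'a::field_char_0 mpoly) (ind R') = of_bool (R' = R)"
proof -
  have fR': "finite R'" using R'sub finite_subset by blast
  have R'n: "R' \<subseteq> {..<n}" using R'sub jn by auto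
  define f :: "nat set \<Rightarrow> 'a" where "f P = fc m (card (P \<inter> R))" for P
  define C where "C a b \<longleftrightarrow> a \<in> R' \<and> b \<in> R' - {a}" for a b
  have s1: "lk (pp :: 'a mpoly) (ind R') = (\<Sum>P\<in>PP. \<Sum>a<n. \<Sum>b<n. if C a b \<and> P = R' - {a, b} then f P else 0)"
    unfolding lk_pp lk_G
  proof (intro sum.cong refl)
    fix P assume P: "P \<in> PP"
    have "fc m (card (P \<inter> R)) * (\<Sum>a<n. \<Sum>b<n. if cnd P a b \<and> ind P + ev a + ev b = ind R' then 1 else 0)
      = (\<Sum>a<n. \<Sum>b<n. if cnd P a b \<and> ind P + ev a + ev b = ind R' then f P else (0::'a))"
      by (simp add: sum_distrib_left f_def) (intro sum.cong refl, simp add: f_def)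
    also have "\<dots> = (\<Sum>a<n. \<Sum>b<n. if C a b \<and> P = R' - {a, b} then f P else 0)"
    proof (intro sum.cong refl)
      fix a b
      have "(cnd P a b \<and> ind P + ev a + ev b = ind R') \<longleftrightarrow> (C a b \<and> P = R' - {a, b})"
        using ind_pair_iff[OF PP_fin[OF P] fR', of a b] unfolding cnd_def C_def by auto
      then show "(if cnd P a b \<and> ind P + ev a + ev b = ind R' then f P else 0) = (if C a b \<and> P = R' - {a, b} then f P else 0)"
        by simp
    qed
    finally show "fc m (card (P \<inter> R)) * (\<Sum>a<n. \<Sum>b<n. if cnd P a b \<and> ind P + ev a + ev b = ind R' then 1 else 0)
      = (\<Sum>a<n. \<Sum>b<n. if C a b \<and> P = R' - {a, b} then f P else 0)" .
  qed
  also have "\<dots> = (\<Sum>a<n. \<Sum>b<n. \<Sum>P\<in>PP. if C a b \<and> P = R' - {a, b} then f P else 0)"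
    by (simp add: sum.swap[of _ PP] sum.swap[of _ PP "{..<n}"])
  also have "\<dots> = (\<Sum>a<n. \<Sum>b<n. if C a b then f (R' - {a, b}) else 0)"
  proof (intro sum.cong refl)
    fix a b
    show "(\<Sum>P\<in>PP. if C a b \<and> P = R' - {a, b} then f P else 0) = (if C a b then f (R' - {a, b}) else 0)"
    proof (cases "C a b")
      case True
      have "card (R' - {a, b}) = m - 2" using True fR' cR' unfolding C_def
        by (simp add: card_rm2)
      then have "R' - {a, b} \<in> PP" unfolding PP_def using R'sub by auto
      then show ?thesis using True finPP by (simp add: eq_commute[of _ "R' - {a, b}"])
    next
      case False then show ?thesis by simp
    qed
  qed
  also have "\<dots> = (\<Sum>a\<in>R'. \<Sum>b\<in>R' - {a}. f (R' - {a, b}))"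
  proof -
    have "(\<Sum>a<n. \<Sum>b<n. if C a b then f (R' - {a, b}) else 0)
        = (\<Sum>a<n. if a \<in> R' then (\<Sum>b<n. if b \<in> R' - {a} then f (R' - {a, b}) else 0) else 0)"
      unfolding C_def by (intro sum.cong refl) auto
    also have "\<dots> = (\<Sum>a<n. if a \<in> R' then (\<Sum>b\<in>R' - {a}. f (R' - {a, b})) else 0)"
    proof (intro sum.cong refl)
      fix a
      have "(\<Sum>b<n. if b \<in> R' - {a} then f (R' - {a, b}) else 0) = (\<Sum>b\<in>{..<n} \<inter> (R' - {a}). f (R' - {a, b}))"
        by (rule sum.inter_restrict[symmetric]) simp
      also have "{..<n} \<inter> (R' - {a}) = R' - {a}" using R'n by auto
      finally show "(if a \<in> R' then (\<Sum>b<n. if b \<in> R' - {a} then f (R' - {a, b}) else 0) else 0)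
          = (if a \<in> R' then (\<Sum>b\<in>R' - {a}. f (R' - {a, b})) else 0)" by simp
    qed
    also have "\<dots> = (\<Sum>a\<in>{..<n} \<inter> R'. \<Sum>b\<in>R' - {a}. f (R' - {a, b}))"
      by (rule sum.inter_restrict[symmetric]) simp
    also have "{..<n} \<inter> R' = R'" using R'n by auto
    finally show ?thesis .
  qed
  also have "\<dots> = (\<Sum>a\<in>R'. \<Sum>b\<in>R' - {a}. (\<lambda>i. fc m (card (R' \<inter> R) - i) :: 'a) (of_bool (a \<in> R) + of_bool (b \<in> R)))"
  proof (intro sum.cong refl)
    fix a b assume a: "a \<in> R'" and b: "b \<in> R' - {a}"
    have "(R' - {a, b}) \<inter> R = (R' \<inter> R) - {a, b}" by auto
    then have "card ((R' - {a, b}) \<inter> R) = card (R' \<inter> R) - of_bool (a \<in> R) - of_bool (b \<in> R)"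
      using card_rm2[of "R' \<inter> R" a b] fR' a b by auto
    then show "f (R' - {a, b}) = (\<lambda>i. fc m (card (R' \<inter> R) - i)) (of_bool (a \<in> R) + of_bool (b \<in> R))"
      unfolding f_def by (simp add: diff_diff_add)
  qed
  also have "\<dots> = of_nat (card (R' \<inter> R) * (card (R' \<inter> R) - 1)) * fc m (card (R' \<inter> R) - 2)
         + of_nat (2 * card (R' \<inter> R) * card (R' - R)) * fc m (card (R' \<inter> R) - 1)
         + of_nat (card (R' - R) * (card (R' - R) - 1)) * fc m (card (R' \<inter> R) - 0)"
    by (rule pair_count[OF fR'])
  also have "\<dots> = of_bool (card (R' \<inter> R) = m)"
  proof -
    define s where "s = card (R' \<inter> R)"
    have st: "s + card (R' - R) = m" unfolding s_def using cR' fR'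
      by (metis Int_Diff_Un Int_Diff_disjoint card_Un_disjoint finite_Diff finite_Int)
    have "R' - R \<subseteq> {..<j} - R" using R'sub by auto
    then have "card (R' - R) \<le> j - m" using card_mono[of "{..<j} - R" "R' - R"] card_diff_R by simp
    then have s2: "2 \<le> s" using st jm m2 by arith
    have tm: "card (R' - R) = m - s" using st by simp
    show ?thesis using fc_eq[OF s2, of m] st unfolding s_def[symmetric] tm by simp
  qed
  also have "card (R' \<inter> R) = m \<longleftrightarrow> R' = R"
  proof
    assume h: "card (R' \<inter> R) = m"
    have "R' \<inter> R = R'" using card_subset_eq[OF fR' _ ] h cR' by (metis Int_lower1)
    moreover have "R' \<inter> R = R" using card_subset_eq[OF finR _ ] h cardR by (metis Int_lower2)
    ultimately show "R' = R" by simp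
  next
    assume "R' = R" then show "card (R' \<inter> R) = m" using cardR by simp
  qed
  finally show ?thesis .
qed

end



context baddata
begin

lemma pp_lead: "lead_mon (pp :: 'a::field_char_0 mpoly) = ind R"
proof (rule lead_mon_eqI)
  have "lk (pp :: 'a mpoly) (ind R) = 1" using pp_val[OF Rsub cardR] by simp
  then show "ind R \<in> Poly_Mapping.keys (pp :: 'a mpoly)" by (simp flip: lookup_not_eq_zero_eq_in_keys)
next
  show "\<forall>N\<in>Poly_Mapping.keys (pp :: 'a mpoly). N \<noteq> ind R \<longrightarrow> revlex_less N (ind R)"
  proof (intro ballI impI)
    fix N assume N: "N \<in> Poly_Mapping.keys (pp :: 'a mpoly)" and ne: "N \<noteq> ind R"
    then have lkN: "lk (pp :: 'a mpoly) N \<noteq> 0" by (simp flip: lookup_not_eq_zero_eq_in_keys)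
    obtain P a b where P: "P \<in> PP" "a < n" "b < n" "cnd P a b" "N = ind P + ev a + ev b"
      using pp_support[OF lkN] by blast
    define R'' where "R'' = insert a (insert b P)"
    have fP: "finite P" using PP_fin[OF P(1)] .
    have fR'': "finite R''" unfolding R''_def using fP by simp
    have NR: "N = ind R''" unfolding R''_def using P(4,5) ind_pair[OF fP] unfolding cnd_def by metis
    have cP: "card P = m - 2" using P(1) unfolding PP_def by simp
    have cR'': "card R'' = m" unfolding R''_def using P(4) fP cP m2 unfolding cnd_def by simp
    show "revlex_less N (ind R)"
    proof (cases "R'' \<subseteq> {..<j}")
      case True
      have "R'' \<noteq> R" using ne NR by blast
      then have "lk (pp :: 'a mpoly) N = 0" using pp_val[OF True cR''] NR by simp
      then show ?thesis using lkN by simp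
    next
      case False
      then obtain x where x: "x \<in> R''" "x \<ge> j" by (meson lessThan_iff not_le subsetI)
      define i0 where "i0 = Max R''"
      have i0: "i0 \<in> R''" "x \<le> i0" unfolding i0_def using x fR'' Max_in[OF fR''] Max_ge[OF fR''] by blast+
      have i0R: "i0 \<notin> R" using Rsub x i0 by auto
      show ?thesis
      proof (unfold NR, rule rl_intro[where i=i0])
        show "mdeg (ind R'') = mdeg (ind R)" using mdeg_ind[OF fR''] mdeg_ind[OF finR] cR'' cardR by simp
        show "lk (ind R) i0 < lk (ind R'') i0" using i0R i0(1) by (simp add: lk_ind fR'' finR)
        fix k assume k: "i0 < k"
        then have "k \<notin> R''" unfolding i0_def using Max_ge[OF fR''] by force
        moreover have "k \<notin> R" using Rsub k i0 x by auto
        ultimately show "lk (ind R'') k = lk (ind R) k" by (simp add: lk_ind fR'' finR)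
      qed
    qed
  qed
qed

lemma bad_in: "(mon (ind R) :: 'a::field_char_0 mpoly) \<in> initial_ideal n (In n)"
proof -
  have "lk (pp :: 'a mpoly) (ind R) = 1" using pp_val[OF Rsub cardR] by simp
  then have "(pp :: 'a mpoly) \<noteq> 0" by auto
  moreover have "(pp :: 'a mpoly) \<in> In n" by (rule pp_in)
  ultimately have "(mon (lead_mon (pp :: 'a mpoly)) :: 'a mpoly) \<in> {mon (lead_mon p) | p. (p :: 'a mpoly) \<in> In n \<and> p \<noteq> 0}"
    by blast
  then show ?thesis unfolding initial_ideal_def pp_lead by (rule gi_gen)
qed

end

lemma initial_mult:
  assumes "(mon A :: 'a::comm_ring_1 mpoly) \<in> initial_ideal n I" "Poly_Mapping.keys B \<subseteq> {..<n}"
  shows "(mon (B + A) :: 'a mpoly) \<in> initial_ideal n I"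
proof -
  have "(mon B :: 'a mpoly) \<in> Pn n" unfolding mon_def using assms(2) by (rule Pn_single)
  then have "(mon B :: 'a mpoly) * mon A \<in> initial_ideal n I"
    using assms(1) unfolding initial_ideal_def by (rule gi_mult)
  then show ?thesis by (simp add: mon_mult)
qed

lemma sq_in_initial:
  assumes keys: "Poly_Mapping.keys \<mu> \<subseteq> {..<n}" and i: "lk \<mu> i \<ge> 2"
  shows "(mon \<mu> :: 'a::field_char_0 mpoly) \<in> initial_ideal n (In n)"
proof -
  have i_n: "i < n" using keys i by (metis lessThan_iff not_in_keys_iff_lookup_eq_zero not_numeral_le_zero subsetD)
  have vsq: "(var i ^ 2 :: 'a mpoly) = mon (ev i + ev i)" by (simp add: var_ev power2_eq_square mon_mult)
  have "lead_mon (var i ^ 2 :: 'a mpoly) = ev i + ev i"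
    unfolding vsq by (rule lead_mon_eqI) (simp_all add: mon_def)
  moreover have "(var i ^ 2 :: 'a mpoly) \<noteq> 0" unfolding vsq mon_def by (metis lookup_single_eq lookup_zero one_neq_zero)
  moreover have "(var i ^ 2 :: 'a mpoly) \<in> In n" by (rule In_var2[OF i_n])
  ultimately have "(mon (ev i + ev i) :: 'a mpoly) = mon (lead_mon (var i ^ 2 :: 'a mpoly)) \<and> (var i ^ 2 :: 'a mpoly) \<in> In n \<and> (var i ^ 2 :: 'a mpoly) \<noteq> 0"
    by simp
  then have "(mon (ev i + ev i) :: 'a mpoly) \<in> {mon (lead_mon p) | p. (p :: 'a mpoly) \<in> In n \<and> p \<noteq> 0}"
    by blast
  then have A: "(mon (ev i + ev i) :: 'a mpoly) \<in> initial_ideal n (In n)"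
    unfolding initial_ideal_def by (rule gi_gen)
  define B where "B = \<mu> - ev i - ev i"
  have eq: "\<mu> = B + (ev i + ev i)"
    by (rule poly_mapping_eqI) (use i in \<open>simp add: B_def lookup_add lookup_minus lk_ev\<close>)
  have "Poly_Mapping.keys B \<subseteq> Poly_Mapping.keys \<mu>" using eq keys_plus_nat by auto
  then have "Poly_Mapping.keys B \<subseteq> {..<n}" using keys by auto
  from initial_mult[OF A this] show ?thesis using eq by simp
qed



definition ballot :: "nat set \<Rightarrow> bool" where
  "ballot S \<longleftrightarrow> (\<forall>v\<in>S. 2 * card (S \<inter> {..v}) \<le> v + 2)"

lemma diff_ne: "card X < card A \<Longrightarrow> finite X \<Longrightarrow> A - X \<noteq> {}"
proof
  assume c: "card X < card A" and f: "finite X" and e: "A - X = {}"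
  then have "A \<subseteq> X" by blast
  then have "card A \<le> card X" by (rule card_mono[OF f])
  then show False using c by simp
qed

lemma ballot_good:
  assumes "finite V" "V \<noteq> {}" "ballot V"
  shows "\<exists>c B \<beta>. V = insert c B \<and> c \<notin> B \<and> inj_on \<beta> B \<and> (\<forall>b\<in>B. \<beta> b < b) \<and> (\<forall>b\<in>B. \<beta> b \<notin> V)"
  using assms
proof (induction "card V" arbitrary: V rule: less_induct)
  case less
  define v where "v = Max V"
  have vV: "v \<in> V" unfolding v_def using Max_in less.prems by blast
  have vmax: "\<And>u. u \<in> V \<Longrightarrow> u \<le> v" unfolding v_def using Max_ge less.prems(1) by blast
  show ?case
  proof (cases "V = {v}")
    case True
    show ?thesis by (rule exI[of _ v], rule exI[of _ "{}"], rule exI[of _ id]) (use True in auto)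
  next
    case False
    define V' where "V' = V - {v}"
    have fV': "finite V'" unfolding V'_def using less.prems by simp
    have neV': "V' \<noteq> {}" unfolding V'_def using False vV by blast
    have cV': "card V' < card V" unfolding V'_def by (rule card_Diff1_less[OF less.prems(1) vV])
    have "card V' = card V - 1" unfolding V'_def using vV by (simp add: card_Diff_singleton)
    moreover have "card V > 0" using less.prems(1,2) by (simp add: card_gt_0_iff)
    ultimately have cV'eq: "card V' + 1 = card V" by simp
    have bV': "ballot V'"
      unfolding ballot_def
    proof
      fix u assume u: "u \<in> V'"
      then have "u < v" using vmax unfolding V'_def by force
      then have "V' \<inter> {..u} = V \<inter> {..u}" unfolding V'_def by auto
      moreover have "u \<in> V" using u unfolding V'_def by simp
      ultimately show "2 * card (V' \<inter> {..u}) \<le> u + 2" using less.prems(3) unfolding ballot_def by simp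
    qed
    obtain c B' \<beta>' where IH: "V' = insert c B'" "c \<notin> B'" "inj_on \<beta>' B'" "\<forall>b\<in>B'. \<beta>' b < b" "\<forall>b\<in>B'. \<beta>' b \<notin> V'"
      using less.hyps[OF cV' fV' neV' bV'] by blast
    have fB': "finite B'" using fV' IH(1) by simp
    have cB': "card B' + 1 = card V'" using IH(1,2) fB' by simp
    have V'lt: "\<And>u. u \<in> V' \<Longrightarrow> u < v" using vmax unfolding V'_def by force
    have sub: "V' \<union> \<beta>' ` B' \<subseteq> {..<v}"
      using V'lt IH(1,4) by (auto intro: less_trans)
    have "card (V' \<union> \<beta>' ` B') = card V' + card B'"
    proof -
      have "card (V' \<union> \<beta>' ` B') = card V' + card (\<beta>' ` B')"
        by (rule card_Un_disjoint) (use fV' fB' IH(5) in auto)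
      also have "card (\<beta>' ` B') = card B'" using card_image[OF IH(3)] .
      finally show ?thesis .
    qed
    moreover have "2 * card V \<le> v + 2"
    proof -
      have e: "V \<inter> {..v} = V" using vmax by auto
      have "2 * card (V \<inter> {..v}) \<le> v + 2" using less.prems(3) vV unfolding ballot_def by blast
      then show ?thesis unfolding e .
    qed
    ultimately have "card (V' \<union> \<beta>' ` B') < card {..<v}" using cV'eq cB' by simp
    then have "{..<v} - (V' \<union> \<beta>' ` B') \<noteq> {}" by (rule diff_ne) (use fV' fB' in simp)
    then obtain a where a: "a < v" "a \<notin> V'" "a \<notin> \<beta>' ` B'" by blast
    define B where "B = insert v B'"
    define \<beta> where "\<beta> = \<beta>'(v := a)"
    have vB': "v \<notin> B'" using IH(1) unfolding V'_def by blast
    have "V = insert c B" unfolding B_def using IH(1) vV unfolding V'_def by blast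
    moreover have "c \<notin> B" unfolding B_def using IH(1,2) unfolding V'_def by blast
    moreover have "inj_on \<beta> B"
    proof -
      have "inj_on \<beta> B'" using IH(3) vB' unfolding \<beta>_def by (metis fun_upd_other inj_on_cong)
      moreover have "\<beta> v \<notin> \<beta> ` B'"
      proof -
        have "\<beta> ` B' = \<beta>' ` B'" unfolding \<beta>_def using vB' by auto
        then show ?thesis using a(3) unfolding \<beta>_def by simp
      qed
      ultimately show ?thesis unfolding B_def using vB' by simp
    qed
    moreover have "\<forall>b\<in>B. \<beta> b < b"
      unfolding B_def \<beta>_def using a(1) IH(4) vB' by auto
    moreover have "\<forall>b\<in>B. \<beta> b \<notin> V"
    proof
      fix b assume b: "b \<in> B"
      show "\<beta> b \<notin> V"
      proof (cases "b = v")
        case True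
        then have "\<beta> b = a" unfolding \<beta>_def by simp
        then show ?thesis using a(1,2) unfolding V'_def by auto
      next
        case False
        then have bB': "b \<in> B'" using b unfolding B_def by simp
        then have "\<beta> b = \<beta>' b" unfolding \<beta>_def using False by simp
        moreover have "\<beta>' b \<notin> V'" using IH(5) bB' by blast
        moreover have "\<beta>' b < v" using IH(1,4) bB' V'lt by (meson insertCI less_trans)
        ultimately show ?thesis unfolding V'_def by auto
      qed
    qed
    ultimately show ?thesis by blast
  qed
qed

lemma ballot_extend:
  assumes S: "S \<subseteq> {..<n}" and b: "ballot S" and c: "2 * card S + 2 \<le> n"
  shows "\<exists>i<n. i \<notin> S \<and> ballot (insert i S)"
proof -
  have fS: "finite S" using S finite_subset by blast
  have "card S < n" using c by simp
  then have "{..<n} - S \<noteq> {}" by (intro diff_ne) (simp_all add: fS)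
  define i where "i = Max ({..<n} - S)"
  have iin: "i \<in> {..<n} - S" unfolding i_def using Max_in \<open>{..<n} - S \<noteq> {}\<close> by blast
  have imax: "k \<in> S" if "k < n" "k > i" for k
  proof (rule ccontr)
    assume "k \<notin> S"
    then have "k \<in> {..<n} - S" using that by simp
    then have "k \<le> i" unfolding i_def by (rule Max_ge[rotated]) simp
    then show False using that by simp
  qed
  define V where "V = insert i S"
  have fV: "finite V" unfolding V_def using fS by simp
  have Vn: "V \<subseteq> {..<n}" unfolding V_def using S iin by auto
  have cV: "card V = card S + 1" unfolding V_def using iin fS by simp
  have "ballot V" unfolding ballot_def
  proof
    fix v assume v: "v \<in> V"
    show "2 * card (V \<inter> {..v}) \<le> v + 2"
    proof (cases "v < i")
      case True
      then have "v \<in> S" using v unfolding V_def by auto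
      moreover have "V \<inter> {..v} = S \<inter> {..v}" unfolding V_def using True by auto
      ultimately show ?thesis using b unfolding ballot_def by simp
    next
      case False
      have vn: "v < n" using v Vn by auto
      have up: "{v<..<n} \<subseteq> V" using imax False unfolding V_def by auto
      have "V = (V \<inter> {..v}) \<union> {v<..<n}" using up Vn by auto
      moreover have "(V \<inter> {..v}) \<inter> {v<..<n} = {}" by auto
      ultimately have "card V = card (V \<inter> {..v}) + card {v<..<n}"
        by (metis card_Un_disjoint fV finite_Int finite_greaterThanLessThan)
      then have "card (V \<inter> {..v}) + (n - 1 - v) = card S + 1" using cV by simp
      then show ?thesis using vn c by linarith
    qed
  qed
  then show ?thesis using iin unfolding V_def by blast
qed



lemma nonballot_in:
  assumes S: "S \<subseteq> {..<n}" and nb: "\<not> ballot S" and keys: "Poly_Mapping.keys \<mu> \<subseteq> {..<n}"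
    and mu: "\<mu> = ind S"
  shows "(mon \<mu> :: 'a::field_char_0 mpoly) \<in> initial_ideal n (In n)"
proof -
  have fS: "finite S" using S finite_subset by blast
  obtain v where v: "v \<in> S" "2 * card (S \<inter> {..v}) > v + 2" using nb unfolding ballot_def by (auto simp: not_le)
  define R where "R = S \<inter> {..v}"
  have fR: "finite R" unfolding R_def using fS by simp
  have bd: "baddata n (v + 1) (card R) R"
  proof
    show "R \<subseteq> {..<v + 1}" unfolding R_def by auto
    show "v + 1 \<le> n" using v S by auto
    show "card R = card R" ..
    show "2 \<le> card R" using v(2) unfolding R_def by linarith
    show "v + 1 + 2 \<le> 2 * card R" using v(2) unfolding R_def by linarith
  qed
  have A: "(mon (ind R) :: 'a mpoly) \<in> initial_ideal n (In n)" by (rule baddata.bad_in[OF bd])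
  define B where "B = ind (S - R)"
  have eq: "\<mu> = B + ind R"
  proof -
    have "S = (S - R) \<union> R" unfolding R_def by auto
    then have "ind S = ind (S - R) + ind R" unfolding ind_def
      by (metis Diff_disjoint fR fS finite_Diff sum.union_disjoint Int_commute)
    then show ?thesis using mu B_def by simp
  qed
  have "Poly_Mapping.keys B \<subseteq> {..<n}" unfolding B_def using S fS by (simp add: keys_ind) blast
  from initial_mult[OF A this] show ?thesis using eq by simp
qed

theorem mainTheorem6:
  fixes d n :: nat and \<mu> :: monom
  assumes "d \<ge> 2" and "n = 2 * d - 2"
    and "is_monomial_in n \<mu>" and "mdeg \<mu> \<le> d - 2"
    and "(mon \<mu> :: 'a::field_char_0 mpoly) \<notin> initial_ideal n (In n)"
  shows "\<exists>\<mu>'. is_monomial_in n \<mu>' \<and> (\<exists>q\<in>Pn n. (mon \<mu>' :: 'a mpoly) = q * mon \<mu>)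
           \<and> mdeg \<mu>' = mdeg \<mu> + 1 \<and> (mon \<mu>' :: 'a mpoly) \<notin> initial_ideal n (In n)"
proof -
  have keys: "Poly_Mapping.keys \<mu> \<subseteq> {..<n}" using assms(3) unfolding is_monomial_in_def .
  have sqf: "lk \<mu> i \<le> 1" for i
  proof (rule ccontr)
    assume "\<not> lk \<mu> i \<le> 1"
    then have "lk \<mu> i \<ge> 2" by simp
    then have "(mon \<mu> :: 'a mpoly) \<in> initial_ideal n (In n)" by (rule sq_in_initial[OF keys])
    then show False using assms(5) by simp
  qed
  define S where "S = Poly_Mapping.keys \<mu>"
  have fS: "finite S" unfolding S_def by simp
  have mu: "\<mu> = ind S"
  proof (rule poly_mapping_eqI)
    fix i
    show "lk \<mu> i = lk (ind S) i"
    proof (cases "i \<in> S")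
      case True
      then have "lk \<mu> i \<noteq> 0" unfolding S_def by (simp flip: lookup_not_eq_zero_eq_in_keys)
      then have "lk \<mu> i = 1" using sqf[of i] by simp
      then show ?thesis using True fS by (simp add: lk_ind)
    next
      case False
      then have "lk \<mu> i = 0" unfolding S_def by (simp add: not_in_keys_iff_lookup_eq_zero)
      then show ?thesis using False fS by (simp add: lk_ind)
    qed
  qed
  have Sn: "S \<subseteq> {..<n}" using keys S_def by simp
  have cS: "card S = mdeg \<mu>" using mdeg_ind[OF fS] mu by simp
  have c2: "2 * card S + 2 \<le> n" using cS assms(1,2,4) by simp
  have bS: "ballot S"
  proof (rule ccontr)
    assume "\<not> ballot S"
    then have "(mon \<mu> :: 'a mpoly) \<in> initial_ideal n (In n)" by (rule nonballot_in[OF Sn _ keys mu])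
    then show False using assms(5) by simp
  qed
  obtain i where i: "i < n" "i \<notin> S" "ballot (insert i S)" using ballot_extend[OF Sn bS c2] by blast
  define V where "V = insert i S"
  have fV: "finite V" unfolding V_def using fS by simp
  have Vn: "V \<subseteq> {..<n}" unfolding V_def using Sn i by auto
  obtain c B \<beta> where g: "V = insert c B" "c \<notin> B" "inj_on \<beta> B" "\<forall>b\<in>B. \<beta> b < b" "\<forall>b\<in>B. \<beta> b \<notin> V"
    using ballot_good[OF fV _ i(3)[folded V_def]] unfolding V_def by blast
  have gd: "gooddata n c B \<beta>"
  proof
    show "finite B" using fV g(1) by simp
    show "inj_on \<beta> B" by (rule g(3))
    show "\<And>b. b \<in> B \<Longrightarrow> \<beta> b < b" using g(4) by blast
    show "c \<notin> B" by (rule g(2))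
    show "\<And>b. b \<in> B \<Longrightarrow> \<beta> b \<notin> insert c B" using g(5) g(1) by simp
    show "c < n" using Vn g(1) by auto
    show "\<And>b. b \<in> B \<Longrightarrow> b < n" using Vn g(1) by auto
  qed
  have notin: "(mon (ind V) :: 'a mpoly) \<notin> initial_ideal n (In n)"
    using gooddata.good_not_in[OF gd] unfolding gooddata.V_def[OF gd] g(1) .
  have indV: "ind V = ev i + \<mu>" unfolding V_def mu using ind_insert[OF fS i(2)] .
  have A: "is_monomial_in n (ind V)" unfolding is_monomial_in_def using Vn fV by (simp add: keys_ind)
  have B: "var i \<in> (Pn n :: 'a mpoly set)" unfolding var_def mon_def using i(1) by (intro Pn_single) simp
  have C: "(mon (ind V) :: 'a mpoly) = var i * mon \<mu>" unfolding indV by (simp add: var_ev mon_mult)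
  have D: "mdeg (ind V) = mdeg \<mu> + 1" unfolding indV mdeg_add
    using mdeg_ind[of "{i}"] by (simp add: ind_def)
  show ?thesis using A B C D notin by blast
qed


end
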